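(* Let $b_n$ denote the number of rooted indecomposable chord diagrams of size $n$ and $g_n$ the number of rooted combinatorial maps of size $n$. Then $b_1=g_1=1$ and for all $n\ge 2$, $$b_n=\sum_{k=1}^{n-1}b_k\,b_{n-k}+(2n-3)\,b_{n-1},\qquad g_n=\sum_{k=1}^{n-1}g_k\,g_{n-k}+(2n-3)\,g_{n-1}.$$
   Context: A rooted chord diagram of size $n$ is (up to isomorphism) a perfect matching of $\{0<1<\dots<2n-1\}$ into $n$ pairs $(a,b)$ with $a<b$ (chords). The concatenation $C_1C_2$ of diagrams of sizes $n_1,n_2$ is the diagram of size $n_1+n_2$ whose matching is $C_1$ on the first $2n_1$ points and (a shifted copy of) $C_2$ on the last $2n_2$ points. A diagram is indecomposable if it is not the concatenation of two (nonempty) diagrams. A rooted combinatorial map is $(H,\sigma,\alpha,r)$ with $H$ a finite set, $\sigma$ a permutation and $\alpha$ an involution of $H$, $r\in H$ with $\alpha(r)=r$, and $\langle\sigma,\alpha\rangle$ transitive on $H$; it is closed ($r$ is the only fixed point of $\alpha$), and maps are counted up to root-preserving isomorphism. Its size is the number of $\alpha$-orbits (edges), the root $\{r\}$ counting as an edge; the one-half-edge map has size 1. *)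

theory Defs
  imports "HOL-Combinatorics.Permutations"
begin

text \<open>A chord diagram of size n is a perfect matching of the points 0 < 1 < ... < 2n-1,
  encoded as a fixed-point-free involution f of {0..<2n} (and f x = x outside).
  Isomorphisms must preserve the linear order of the points, hence are trivial, so
  isomorphism classes of diagrams are exactly these matchings.\<close>

definition chord_diagram :: "nat \<Rightarrow> (nat \<Rightarrow> nat) \<Rightarrow> bool" where
  "chord_diagram n f \<longleftrightarrow>
     (\<forall>x<2*n. f x < 2*n \<and> f x \<noteq> x \<and> f (f x) = x) \<and> (\<forall>x. 2*n \<le> x \<longrightarrow> f x = x)"

definition concat_diagram :: "nat \<Rightarrow> (nat \<Rightarrow> nat) \<Rightarrow> nat \<Rightarrow> (nat \<Rightarrow> nat) \<Rightarrow> (nat \<Rightarrow> nat)" where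
  "concat_diagram n1 f1 n2 f2 = (\<lambda>x. if x < 2*n1 then f1 x
        else if x < 2*(n1+n2) then f2 (x - 2*n1) + 2*n1 else x)"

definition indecomposable :: "nat \<Rightarrow> (nat \<Rightarrow> nat) \<Rightarrow> bool" where
  "indecomposable n f \<longleftrightarrow>
     \<not> (\<exists>n1 n2 f1 f2. 0 < n1 \<and> 0 < n2 \<and> n1 + n2 = n \<and> chord_diagram n1 f1 \<and>
           chord_diagram n2 f2 \<and> f = concat_diagram n1 f1 n2 f2)"

definition b_count :: "nat \<Rightarrow> nat" where
  "b_count n = card {f. chord_diagram n f \<and> indecomposable n f}"

text \<open>A rooted map is represented on the canonical carrier H = {0..<m} with root r = 0;
  a triple (m, \<sigma>, \<alpha>).\<close>

definition rooted_map :: "nat \<times> (nat \<Rightarrow> nat) \<times> (nat \<Rightarrow> nat) \<Rightarrow> bool" where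
  "rooted_map M = (case M of (m, \<sigma>, \<alpha>) \<Rightarrow>
     0 < m \<and> \<sigma> permutes {0..<m} \<and> \<alpha> permutes {0..<m} \<and> (\<forall>x<m. \<alpha> (\<alpha> x) = x) \<and>
     \<alpha> 0 = 0 \<and>
     (\<forall>x<m. \<forall>y<m. (x, y) \<in>
        ({(z, \<sigma> z) | z. z < m} \<union> {(\<sigma> z, z) | z. z < m} \<union> {(z, \<alpha> z) | z. z < m})\<^sup>*))"

definition closed_map :: "nat \<times> (nat \<Rightarrow> nat) \<times> (nat \<Rightarrow> nat) \<Rightarrow> bool" where
  "closed_map M = (case M of (m, \<sigma>, \<alpha>) \<Rightarrow> (\<forall>x<m. \<alpha> x = x \<longleftrightarrow> x = 0))"

text \<open>Size = number of \<alpha>-orbits (the root counts as an edge).\<close>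
definition map_size :: "nat \<times> (nat \<Rightarrow> nat) \<times> (nat \<Rightarrow> nat) \<Rightarrow> nat" where
  "map_size M = (case M of (m, \<sigma>, \<alpha>) \<Rightarrow> card {{x, \<alpha> x} | x. x < m})"

definition map_iso :: "nat \<times> (nat \<Rightarrow> nat) \<times> (nat \<Rightarrow> nat) \<Rightarrow> nat \<times> (nat \<Rightarrow> nat) \<times> (nat \<Rightarrow> nat) \<Rightarrow> bool" where
  "map_iso M M' = (case M of (m, \<sigma>, \<alpha>) \<Rightarrow> case M' of (m', \<sigma>', \<alpha>') \<Rightarrow>
     m = m' \<and> (\<exists>\<phi>. \<phi> permutes {0..<m} \<and> \<phi> 0 = 0 \<and>
        (\<forall>x<m. \<phi> (\<sigma> x) = \<sigma>' (\<phi> x) \<and> \<phi> (\<alpha> x) = \<alpha>' (\<phi> x))))"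

definition closed_maps_of_size :: "nat \<Rightarrow> (nat \<times> (nat \<Rightarrow> nat) \<times> (nat \<Rightarrow> nat)) set" where
  "closed_maps_of_size n = {M. rooted_map M \<and> closed_map M \<and> map_size M = n}"

definition g_count :: "nat \<Rightarrow> nat" where
  "g_count n = card (closed_maps_of_size n //
      {(M, M'). M \<in> closed_maps_of_size n \<and> M' \<in> closed_maps_of_size n \<and> map_iso M M'})"

end

theory Submission
  imports Defs "HOL-Computational_Algebra.Formal_Power_Series"
begin


unbundle fps_syntax

fun dfac :: "nat \<Rightarrow> nat" where
  "dfac 0 = 1" | "dfac (Suc n) = (2*n+1) * dfac n"

lemma dfac_pos: "dfac n > 0" by (induction n) auto

lemma alg_main:
  fixes a :: "nat \<Rightarrow> nat"
  assumes H: "\<forall>n\<ge>1. dfac n = (\<Sum>k=1..n. a k * dfac (n-k))"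
  shows "a 1 = 1 \<and> (\<forall>n\<ge>2. a n = (\<Sum>k=1..n-1. a k * a (n-k)) + (2*n-3)*a(n-1))"
proof -
  define D :: "rat fps" where "D = Abs_fps (\<lambda>n. of_nat (dfac n))"
  define B :: "rat fps" where "B = Abs_fps (\<lambda>n. if n = 0 then 0 else of_nat (a n))"
  have a1: "a 1 = 1" using H[rule_format, of 1] by simp
  have DB: "D = 1 + B * D"
  proof (rule fps_ext)
    fix n
    show "D $ n = (1 + B * D) $ n"
    proof (cases "n = 0")
      case True then show ?thesis by (simp add: D_def B_def)
    next
      case False
      have "(B*D) $ n = (\<Sum>i=0..n. B$i * D$(n-i))" by (rule fps_mult_nth)
      also have "\<dots> = (\<Sum>i=1..n. B$i * D$(n-i))"
        by (simp add: B_def sum.atLeast_Suc_atMost)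
      also have "\<dots> = (\<Sum>i=1..n. of_nat (a i * dfac (n-i)))"
        by (intro sum.cong) (auto simp: B_def D_def)
      also have "\<dots> = of_nat (dfac n)" using H[rule_format, of n] False
        by (simp only: of_nat_sum[symmetric])
      finally show ?thesis using False by (simp add: D_def)
    qed
  qed
  have Drec: "D = 1 + fps_X * D + 2 * fps_X^2 * fps_deriv D"
  proof (rule fps_ext)
    fix n
    show "D $ n = (1 + fps_X * D + 2 * fps_X^2 * fps_deriv D) $ n"
    proof (cases n)
      case 0 then show ?thesis by (simp add: D_def fps_X_power_mult_nth)
    next
      case (Suc m)
      have e: "(2 * fps_X^2 * fps_deriv D) $ n = 2 * (fps_X^2 * fps_deriv D) $ n"
        by (simp add: mult.assoc numeral_fps_const del: fps_X_power_mult_nth)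
      show ?thesis
      proof (cases m)
        case 0 then show ?thesis using Suc e by (simp add: D_def fps_X_power_mult_nth)
      next
        case (Suc k)
        have "(2 * fps_X^2 * fps_deriv D) $ n = 2 * (of_nat (k+1) * of_nat (dfac (Suc k)))"
          using e \<open>n = Suc m\<close> Suc by (simp add: fps_X_power_mult_nth D_def)
        then show ?thesis using \<open>n = Suc m\<close> Suc by (simp add: D_def algebra_simps)
      qed
    qed
  qed
  have dD: "fps_deriv D = fps_deriv B * D + B * fps_deriv D"
    using arg_cong[OF DB, of fps_deriv] by (simp add: algebra_simps)
  have D1: "D - B * D = 1" using DB by (simp add: algebra_simps)
  have BD: "B * D = D - 1" using D1 by (simp add: algebra_simps)
  have key: "D^2 * fps_deriv B = fps_deriv D"
  proof -
    have "D^2 * fps_deriv B = D * (fps_deriv B * D)" by (simp add: power2_eq_square algebra_simps)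
    also have "\<dots> = D * (fps_deriv D - B * fps_deriv D)" using dD by (metis add_diff_cancel_right')
    also have "\<dots> = (D - B * D) * fps_deriv D" by (simp add: algebra_simps)
    also have "\<dots> = fps_deriv D" using D1 by simp
    finally show ?thesis .
  qed
  have "D^2 * (fps_X + B^2 + 2 * fps_X^2 * fps_deriv B - fps_X * B - B) =
     fps_X * D^2 + (B*D)^2 + 2 * fps_X^2 * (D^2 * fps_deriv B) - fps_X * D * (B*D) - D * (B*D)"
    by (simp add: power2_eq_square algebra_simps)
  also have "\<dots> = fps_X * D^2 + (D - 1)^2 + 2 * fps_X^2 * fps_deriv D - fps_X * D * (D - 1) - D * (D - 1)"
    using D1 by (simp only: key BD)
  also have "\<dots> = 1 + fps_X * D + 2 * fps_X^2 * fps_deriv D - D"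
    by (simp add: power2_eq_square algebra_simps)
  also have "\<dots> = 0" using Drec by simp
  finally have z: "D^2 * (fps_X + B^2 + 2 * fps_X^2 * fps_deriv B - fps_X * B - B) = 0" .
  have "D \<noteq> 0" using dfac_pos by (auto simp: D_def fps_eq_iff)
  then have Beq: "B = fps_X + B^2 + 2 * fps_X^2 * fps_deriv B - fps_X * B"
    using z by simp
  have "\<forall>n\<ge>2. a n = (\<Sum>k=1..n-1. a k * a (n-k)) + (2*n-3)*a(n-1)"
  proof (intro allI impI)
    fix n :: nat assume n2: "n \<ge> 2"
    then obtain m where m: "n = Suc (Suc m)" by (metis add_2_eq_Suc le_Suc_ex)
    have c1: "B $ n = (B^2) $ n + (2 * fps_X^2 * fps_deriv B) $ n - (fps_X * B) $ n + fps_X $ n"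
      using arg_cong[OF Beq, of "\<lambda>f. f $ n"] by simp
    have c2: "(B^2) $ n = (\<Sum>k=1..n-1. of_nat (a k * a (n-k)))"
    proof -
      have "(B^2) $ n = (\<Sum>i=0..n. B$i * B$(n-i))" by (simp add: power2_eq_square fps_mult_nth)
      also have "\<dots> = (\<Sum>i=1..n. B$i * B$(n-i))" by (simp add: B_def sum.atLeast_Suc_atMost, intro sum.cong) auto
      also have "\<dots> = (\<Sum>i=1..n-1. B$i * B$(n-i))" using n2
        using m by (simp add: sum.cl_ivl_Suc B_def)
      also have "\<dots> = (\<Sum>k=1..n-1. of_nat (a k * a (n-k)))"
        by (intro sum.cong) (auto simp: B_def)
      finally show ?thesis .
    qed
    have c3: "(2 * fps_X^2 * fps_deriv B) $ n = 2 * of_nat (Suc m) * of_nat (a (Suc m))"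
      using m by (simp add: mult.assoc numeral_fps_const fps_X_power_mult_nth B_def)
    have c4: "(fps_X * B) $ n = of_nat (a (Suc m))" using m by (simp add: B_def)
    have "(of_nat (a n) :: rat) = of_nat (\<Sum>k=1..n-1. a k * a (n-k)) + of_nat ((2*n-3)*a(n-1))"
      using c1 c2 c3 c4 m n2 by (simp add: B_def of_nat_sum algebra_simps)
    then show "a n = (\<Sum>k=1..n-1. a k * a (n-k)) + (2*n-3)*a(n-1)"
      by (metis of_nat_add of_nat_eq_iff)
  qed
  then show ?thesis using a1 by simp
qed


definition fpfi :: "nat set \<Rightarrow> (nat \<Rightarrow> nat) set" where
 "fpfi B = {f. (\<forall>x\<in>B. f x \<in> B \<and> f x \<noteq> x \<and> f (f x) = x) \<and> (\<forall>x. x \<notin> B \<longrightarrow> f x = x)}"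

lemma fpfi_empty: "fpfi {} = {id}"
  by (auto simp: fpfi_def fun_eq_iff)

lemma fpfi_step:
  assumes "b \<in> B"
  shows "fpfi B = (\<lambda>(c,g). g(b:=c, c:=b)) ` (SIGMA c:B-{b}. fpfi (B-{b,c}))"
proof
  show "fpfi B \<subseteq> (\<lambda>(c,g). g(b:=c, c:=b)) ` (SIGMA c:B-{b}. fpfi (B-{b,c}))"
  proof
    fix f assume f: "f \<in> fpfi B"
    let ?c = "f b" let ?g = "f(b:=b, f b := f b)"
    have c: "?c \<in> B - {b}" using f assms by (auto simp: fpfi_def)
    have fb: "\<forall>x\<in>B. f x \<in> B \<and> f x \<noteq> x \<and> f (f x) = x" "\<forall>x. x \<notin> B \<longrightarrow> f x = x"
      using f by (auto simp: fpfi_def)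
    have g: "?g \<in> fpfi (B-{b,?c})"
      unfolding fpfi_def
    proof (intro CollectI conjI ballI allI impI)
      fix x assume x: "x \<in> B - {b, f b}"
      have fx: "f (f x) = x" "f x \<in> B" "f x \<noteq> x" using fb x by auto
      have fbb: "f (f b) = b" using fb assms by auto
      have "f x \<noteq> b" proof assume "f x = b" then have "f b = x" using fx by simp
        then show False using x by simp qed
      moreover have "f x \<noteq> f b" proof assume "f x = f b" then have "x = b" using fx fbb by metis
        then show False using x by simp qed
      ultimately show "?g x \<in> B - {b, f b}" "?g x \<noteq> x" "?g (?g x) = x" using x fx by auto
    next
      fix x assume "x \<notin> B - {b, f b}" then show "?g x = x" using fb by auto
    qed
    have fbb: "f (f b) = b" using fb assms by auto
    have fe: "f = ?g(b:=?c, ?c:=b)" using fbb by (auto simp: fun_eq_iff)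
    show "f \<in> (\<lambda>(c,g). g(b:=c, c:=b)) ` (SIGMA c:B-{b}. fpfi (B-{b,c}))"
    proof (rule image_eqI[of _ _ "(?c, ?g)"])
      show "f = (\<lambda>(c,g). g(b:=c, c:=b)) (?c, ?g)" using fe by simp
      show "(?c, ?g) \<in> (SIGMA c:B-{b}. fpfi (B-{b,c}))" using c g by blast
    qed
  qed
next
  show "(\<lambda>(c,g). g(b:=c, c:=b)) ` (SIGMA c:B-{b}. fpfi (B-{b,c})) \<subseteq> fpfi B"
  proof
    fix f assume "f \<in> (\<lambda>(c,g). g(b:=c, c:=b)) ` (SIGMA c:B-{b}. fpfi (B-{b,c}))"
    then obtain c g where c: "c \<in> B - {b}" and g: "g \<in> fpfi (B - {b, c})" and fdef: "f = g(b:=c, c:=b)" by auto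
    have gb: "\<forall>x\<in>B-{b,c}. g x \<in> B-{b,c} \<and> g x \<noteq> x \<and> g (g x) = x" "\<forall>x. x \<notin> B-{b,c} \<longrightarrow> g x = x"
      using g by (auto simp: fpfi_def)
    show "f \<in> fpfi B" unfolding fpfi_def fdef
    proof (intro CollectI conjI ballI allI impI)
      fix x assume x: "x \<in> B"
      show "(g(b:=c, c:=b)) x \<in> B" "(g(b:=c, c:=b)) x \<noteq> x" "(g(b:=c, c:=b)) ((g(b:=c, c:=b)) x) = x"
        using x gb c assms by (cases "x = b \<or> x = c"; auto)+
    next
      fix x assume "x \<notin> B" then show "(g(b:=c, c:=b)) x = x" using gb c assms by auto
    qed
  qed
qed

lemma fpfi_inj:
  assumes "b \<in> B"
  shows "inj_on (\<lambda>(c,g). g(b:=c, c:=b)) (SIGMA c:B-{b}. fpfi (B-{b,c}))"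
proof (rule inj_onI)
  fix p q assume p: "p \<in> (SIGMA c:B-{b}. fpfi (B-{b,c}))" and q: "q \<in> (SIGMA c:B-{b}. fpfi (B-{b,c}))"
    and e0: "(\<lambda>(c,g). g(b:=c, c:=b)) p = (\<lambda>(c,g). g(b:=c, c:=b)) q"
  obtain c g where pc: "p = (c,g)" by (cases p)
  obtain c' g' where qc: "q = (c',g')" by (cases q)
  have c: "c \<in> B - {b}" "g \<in> fpfi (B-{b,c})" using p pc by auto
  have c': "c' \<in> B - {b}" "g' \<in> fpfi (B-{b,c'})" using q qc by auto
  have e: "g(b:=c, c:=b) = g'(b:=c', c':=b)" using e0 pc qc by simp
  have "c = c'" using fun_cong[OF e, of b] c c' by auto
  moreover have "g = g'"
  proof
    fix x show "g x = g' x"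
      using fun_cong[OF e, of x] c c' \<open>c = c'\<close> unfolding fpfi_def by (cases "x = b \<or> x = c") auto
  qed
  ultimately show "p = q" using pc qc by simp
qed

definition fpfc :: "nat \<Rightarrow> nat" where
  "fpfc n = (if even n then dfac (n div 2) else 0)"

lemma fpfi_card_aux:
  "\<forall>B. finite B \<longrightarrow> card B = n \<longrightarrow> finite (fpfi B) \<and> card (fpfi B) = fpfc n"
proof (induction n rule: less_induct)
  case (less n)
  show ?case
  proof (intro allI impI)
    fix B :: "nat set" assume fB: "finite B" and cB: "card B = n"
    show "finite (fpfi B) \<and> card (fpfi B) = fpfc n"
    proof (cases "B = {}")
      case True then show ?thesis using cB by (simp add: fpfi_empty fpfc_def)
    next
      case False
      then obtain b where b: "b \<in> B" by auto
      have IH: "finite (fpfi (B-{b,c})) \<and> card (fpfi (B-{b,c})) = fpfc (n-2)" if "c \<in> B-{b}" for c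
      proof -
        have "card (B-{b,c}) = n - 2" using that b cB fB by (simp add: card_Diff_subset)
        moreover have "n - 2 < n" using b fB cB by (cases n) (auto simp: card_gt_0_iff)
        ultimately show ?thesis using less.IH fB by blast
      qed
      have fS: "finite (SIGMA c:B-{b}. fpfi (B-{b,c}))" using IH fB by auto
      have "card (fpfi B) = card (SIGMA c:B-{b}. fpfi (B-{b,c}))"
        using fpfi_step[OF b] card_image[OF fpfi_inj[OF b]] by simp
      also have "\<dots> = (\<Sum>c\<in>B-{b}. card (fpfi (B-{b,c})))"
        using fB IH by (simp add: card_SigmaI)
      also have "\<dots> = (n - 1) * fpfc (n-2)" using IH fB b cB by simp
      also have "\<dots> = fpfc n"
      proof -
        have n1: "n \<ge> 1" using b fB cB by (cases n) (auto simp: card_gt_0_iff)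
        show ?thesis
        proof (cases "n = 1")
          case True then show ?thesis by (simp add: fpfc_def)
        next
          case False
          then obtain m where m: "n = Suc (Suc m)" using n1 by (metis One_nat_def Suc_pred le_neq_implies_less less_iff_Suc_add plus_1_eq_Suc)
          show ?thesis using m by (auto simp: fpfc_def)
        qed
      qed
      finally show ?thesis using fpfi_step[OF b] fS by simp
    qed
  qed
qed

lemma fpfi_card: "finite B \<Longrightarrow> card (fpfi B) = fpfc (card B)"
  and fpfi_finite: "finite B \<Longrightarrow> finite (fpfi B)"
  using fpfi_card_aux by blast+


lemma chord_fpfi: "chord_diagram n f \<longleftrightarrow> f \<in> fpfi {0..<2*n}"
  unfolding chord_diagram_def fpfi_def by auto

lemma card_diag: "card {f. chord_diagram n f} = dfac n"
proof -
  have "{f. chord_diagram n f} = fpfi {0..<2*n}" using chord_fpfi by auto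
  then show ?thesis using fpfi_card[of "{0..<2*n}"] by (simp add: fpfc_def)
qed

lemma finite_diag: "finite {f. chord_diagram n f}"
proof -
  have "{f. chord_diagram n f} = fpfi {0..<2*n}" using chord_fpfi by auto
  then show ?thesis using fpfi_finite[of "{0..<2*n}"] by simp
qed

definition restr :: "nat \<Rightarrow> (nat \<Rightarrow> nat) \<Rightarrow> nat \<Rightarrow> nat" where
  "restr k f = (\<lambda>x. if x < 2*k then f x else x)"
definition shft :: "nat \<Rightarrow> nat \<Rightarrow> (nat \<Rightarrow> nat) \<Rightarrow> nat \<Rightarrow> nat" where
  "shft k n f = (\<lambda>x. if x < 2*(n-k) then f (x + 2*k) - 2*k else x)"

lemma split_diag:
  assumes d: "chord_diagram n f" and kn: "k \<le> n" and cl: "\<forall>x<2*k. f x < 2*k"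
  shows "chord_diagram k (restr k f) \<and> chord_diagram (n-k) (shft k n f) \<and>
         f = concat_diagram k (restr k f) (n-k) (shft k n f)"
proof -
  have D: "\<forall>x<2*n. f x < 2*n \<and> f x \<noteq> x \<and> f (f x) = x" "\<forall>x. 2*n \<le> x \<longrightarrow> f x = x"
    using d by (auto simp: chord_diagram_def)
  have hi: "f x \<ge> 2*k" if "2*k \<le> x" "x < 2*n" for x
  proof (rule ccontr)
    assume "\<not> f x \<ge> 2*k"
    then have "f (f x) < 2*k" using cl by auto
    then show False using D that by auto
  qed
  have A: "chord_diagram k (restr k f)" unfolding chord_diagram_def restr_def
    using D cl kn by auto
  have B1: "shft k n f x < 2*(n-k) \<and> shft k n f x \<noteq> x \<and> shft k n f (shft k n f x) = x"
    if x: "x < 2*(n-k)" for x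
  proof -
    have x2: "x + 2*k < 2*n" "2*k \<le> x + 2*k" using x kn by auto
    have h: "f (x+2*k) \<ge> 2*k" "f (x+2*k) < 2*n" "f (x+2*k) \<noteq> x + 2*k" "f (f (x+2*k)) = x+2*k"
      using hi[OF x2(2) x2(1)] D x2 by auto
    have e: "f (x + 2*k) - 2*k + 2*k = f (x+2*k)" using h by simp
    have l: "f (x + 2*k) - 2*k < 2*(n-k)" using h kn by auto
    show ?thesis using x h l e by (simp add: shft_def)
  qed
  have B: "chord_diagram (n-k) (shft k n f)" unfolding chord_diagram_def
  proof (intro conjI allI impI)
    fix x assume "x < 2*(n-k)" then show "shft k n f x < 2*(n-k)" "shft k n f x \<noteq> x" "shft k n f (shft k n f x) = x"
      using B1 by blast+
  next
    fix x assume "2*(n-k) \<le> x" then show "shft k n f x = x" by (simp add: shft_def)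
  qed
  have C: "f = concat_diagram k (restr k f) (n-k) (shft k n f)"
  proof
    fix x show "f x = concat_diagram k (restr k f) (n - k) (shft k n f) x"
    proof (cases "x < 2*k")
      case True then show ?thesis by (simp add: concat_diagram_def restr_def)
    next
      case False
      show ?thesis
      proof (cases "x < 2*n")
        case True
        have "f x \<ge> 2*k" using hi False True by simp
        then show ?thesis using False True kn by (auto simp: concat_diagram_def shft_def)
      next
        case F2: False then show ?thesis using D False kn by (simp add: concat_diagram_def)
      qed
    qed
  qed
  show ?thesis using A B C by simp
qed

lemma concat_diag:
  assumes d1: "chord_diagram n1 f1" and d2: "chord_diagram n2 f2"
  shows "chord_diagram (n1+n2) (concat_diagram n1 f1 n2 f2)"
proof -
  have D1: "\<forall>x<2*n1. f1 x < 2*n1 \<and> f1 x \<noteq> x \<and> f1 (f1 x) = x" using d1 by (auto simp: chord_diagram_def)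
  have D2: "\<forall>x<2*n2. f2 x < 2*n2 \<and> f2 x \<noteq> x \<and> f2 (f2 x) = x" using d2 by (auto simp: chord_diagram_def)
  let ?F = "concat_diagram n1 f1 n2 f2"
  have P: "?F x < 2*(n1+n2) \<and> ?F x \<noteq> x \<and> ?F (?F x) = x" if x: "x < 2*(n1+n2)" for x
  proof (cases "x < 2*n1")
    case True then show ?thesis using D1 by (auto simp: concat_diagram_def)
  next
    case False
    then have x': "x - 2*n1 < 2*n2" using x by auto
    then have h: "f2 (x - 2*n1) < 2*n2" "f2 (x - 2*n1) \<noteq> x - 2*n1" "f2 (f2 (x - 2*n1)) = x - 2*n1"
      using D2 by auto
    have "?F x = f2 (x - 2*n1) + 2*n1" using False x by (simp add: concat_diagram_def)
    moreover have "?F (f2 (x - 2*n1) + 2*n1) = f2 (f2 (x - 2*n1)) + 2*n1"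
      using h by (simp add: concat_diagram_def)
    ultimately show ?thesis using h False x by auto
  qed
  show ?thesis unfolding chord_diagram_def
  proof (intro conjI allI impI)
    fix x assume "x < 2*(n1+n2)" then show "?F x < 2*(n1+n2)" "?F x \<noteq> x" "?F (?F x) = x" using P by blast+
  next
    fix x assume "2*(n1+n2) \<le> x" then show "?F x = x" by (simp add: concat_diagram_def)
  qed
qed

lemma restr_concat:
  assumes "chord_diagram k f1"
  shows "restr k (concat_diagram k f1 n2 f2) = f1"
  using assms by (auto simp: restr_def concat_diagram_def chord_diagram_def fun_eq_iff)

lemma shft_concat:
  assumes "chord_diagram n2 f2" "n = k + n2"
  shows "shft k n (concat_diagram k f1 n2 f2) = f2"
  using assms by (auto simp: shft_def concat_diagram_def chord_diagram_def fun_eq_iff)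

definition Ind :: "nat \<Rightarrow> (nat \<Rightarrow> nat) set" where
  "Ind k = {f. chord_diagram k f \<and> indecomposable k f}"

lemma diag_decomp:
  assumes n: "n \<ge> 1"
  shows "{f. chord_diagram n f} = (\<lambda>(k,(f1,f2)). concat_diagram k f1 (n-k) f2) `
           (SIGMA k:{1..n}. Ind k \<times> {f. chord_diagram (n-k) f})"
proof
  show "(\<lambda>(k,(f1,f2)). concat_diagram k f1 (n-k) f2) ` (SIGMA k:{1..n}. Ind k \<times> {f. chord_diagram (n-k) f})
        \<subseteq> {f. chord_diagram n f}"
  proof
    fix F assume "F \<in> (\<lambda>(k,(f1,f2)). concat_diagram k f1 (n-k) f2) ` (SIGMA k:{1..n}. Ind k \<times> {f. chord_diagram (n-k) f})"
    then obtain k f1 f2 where "k \<in> {1..n}" "f1 \<in> Ind k" "f2 \<in> {f. chord_diagram (n-k) f}" "F = concat_diagram k f1 (n-k) f2"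
      by auto
    then show "F \<in> {f. chord_diagram n f}"
      using concat_diag[of k f1 "n-k" f2] by (auto simp: Ind_def)
  qed
next
  show "{f. chord_diagram n f} \<subseteq> (\<lambda>(k,(f1,f2)). concat_diagram k f1 (n-k) f2) `
           (SIGMA k:{1..n}. Ind k \<times> {f. chord_diagram (n-k) f})"
  proof
    fix f assume "f \<in> {f. chord_diagram n f}"
    then have d: "chord_diagram n f" by simp
    define K where "K = {k. 1 \<le> k \<and> k \<le> n \<and> (\<forall>x<2*k. f x < 2*k)}"
    have nK: "n \<in> K" using d n by (auto simp: K_def chord_diagram_def)
    define k where "k = (LEAST k. k \<in> K)"
    have kK: "k \<in> K" unfolding k_def using nK by (rule LeastI)
    have kmin: "\<And>j. j \<in> K \<Longrightarrow> k \<le> j" unfolding k_def by (rule Least_le)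
    have sp: "chord_diagram k (restr k f) \<and> chord_diagram (n-k) (shft k n f) \<and>
         f = concat_diagram k (restr k f) (n-k) (shft k n f)"
      using split_diag[OF d] kK by (auto simp: K_def)
    have ind: "indecomposable k (restr k f)"
      unfolding indecomposable_def
    proof
      assume "\<exists>n1 n2 f1 f2. 0 < n1 \<and> 0 < n2 \<and> n1 + n2 = k \<and> chord_diagram n1 f1 \<and>
           chord_diagram n2 f2 \<and> restr k f = concat_diagram n1 f1 n2 f2"
      then obtain n1 n2 f1 f2 where h: "0 < n1" "0 < n2" "n1 + n2 = k" "chord_diagram n1 f1"
          "restr k f = concat_diagram n1 f1 n2 f2" by blast
      have "\<forall>x<2*n1. f x < 2*n1"
      proof (intro allI impI)
        fix x assume x: "x < 2*n1"
        have "f x = restr k f x" using x h(3) by (simp add: restr_def)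
        also have "\<dots> = f1 x" using h(5) x by (simp add: concat_diagram_def)
        finally show "f x < 2*n1" using h(4) x by (simp add: chord_diagram_def)
      qed
      then have "n1 \<in> K" using h kK by (auto simp: K_def)
      then show False using kmin h by fastforce
    qed
    show "f \<in> (\<lambda>(k,(f1,f2)). concat_diagram k f1 (n-k) f2) `
           (SIGMA k:{1..n}. Ind k \<times> {f. chord_diagram (n-k) f})"
    proof (rule image_eqI[of _ _ "(k, (restr k f, shft k n f))"])
      show "f = (\<lambda>(k,(f1,f2)). concat_diagram k f1 (n-k) f2) (k, (restr k f, shft k n f))" using sp by simp
      show "(k, (restr k f, shft k n f)) \<in> (SIGMA k:{1..n}. Ind k \<times> {f. chord_diagram (n-k) f})"
        using sp ind kK by (auto simp: K_def Ind_def)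
    qed
  qed
qed

lemma diag_decomp_inj:
  shows "inj_on (\<lambda>(k,(f1,f2)). concat_diagram k f1 (n-k) f2)
           (SIGMA k:{1..n}. Ind k \<times> {f. chord_diagram (n-k) f})"
proof -
  have noless: False if lt: "k < k'" and kn: "k' \<le> n" and k1: "1 \<le> k"
    and i1: "f1 \<in> Ind k" and i2: "f1' \<in> Ind k'" and d2: "chord_diagram (n-k) f2"
    and d2': "chord_diagram (n-k') f2'"
    and e: "concat_diagram k f1 (n-k) f2 = concat_diagram k' f1' (n-k') f2'" for k k' f1 f2 f1' f2'
  proof -
    have c1: "chord_diagram k f1" and c1': "chord_diagram k' f1'" "indecomposable k' f1'"
      using i1 i2 by (auto simp: Ind_def)
    have cl: "\<forall>x<2*k. f1' x < 2*k"
    proof (intro allI impI)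
      fix x assume x: "x < 2*k"
      have "f1' x = concat_diagram k' f1' (n-k') f2' x" using x lt by (simp add: concat_diagram_def)
      also have "\<dots> = concat_diagram k f1 (n-k) f2 x" using e by simp
      also have "\<dots> = f1 x" using x by (simp add: concat_diagram_def)
      finally show "f1' x < 2*k" using c1 x by (simp add: chord_diagram_def)
    qed
    have sp: "chord_diagram k (restr k f1') \<and> chord_diagram (k'-k) (shft k k' f1') \<and>
         f1' = concat_diagram k (restr k f1') (k'-k) (shft k k' f1')"
      using split_diag[OF c1'(1) _ cl] lt by simp
    then show False using c1'(2) lt k1 unfolding indecomposable_def
      by (metis add_diff_inverse_nat diff_is_0_eq' gr0I le_eq_less_or_eq less_imp_le_nat less_le_trans nat_less_le not_one_le_zero)
  qed
  show ?thesis
  proof (rule inj_onI)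
    fix p q assume p: "p \<in> (SIGMA k:{1..n}. Ind k \<times> {f. chord_diagram (n-k) f})"
      and q: "q \<in> (SIGMA k:{1..n}. Ind k \<times> {f. chord_diagram (n-k) f})"
      and e0: "(\<lambda>(k,(f1,f2)). concat_diagram k f1 (n-k) f2) p = (\<lambda>(k,(f1,f2)). concat_diagram k f1 (n-k) f2) q"
    obtain k f1 f2 where pc: "p = (k,(f1,f2))" by (cases p) auto
    obtain k' f1' f2' where qc: "q = (k',(f1',f2'))" by (cases q) auto
    have P: "1 \<le> k" "k \<le> n" "f1 \<in> Ind k" "chord_diagram (n-k) f2" using p pc by auto
    have Q: "1 \<le> k'" "k' \<le> n" "f1' \<in> Ind k'" "chord_diagram (n-k') f2'" using q qc by auto
    have e: "concat_diagram k f1 (n-k) f2 = concat_diagram k' f1' (n-k') f2'" using e0 pc qc by simp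
    have kk: "k = k'"
    proof (rule ccontr)
      assume "k \<noteq> k'"
      then have "k < k' \<or> k' < k" by auto
      then show False
      proof
        assume "k < k'" then show False using noless[OF _ Q(2) P(1) P(3) Q(3) P(4) Q(4) e] by blast
      next
        assume "k' < k" then show False using noless[OF _ P(2) Q(1) Q(3) P(3) Q(4) P(4) e[symmetric]] by blast
      qed
    qed
    have "f1 = f1'" using restr_concat[of k f1 "n-k" f2] restr_concat[of k f1' "n-k" f2'] e kk P Q
      by (auto simp: Ind_def)
    moreover have "f2 = f2'" using shft_concat[of "n-k" f2 n k f1] shft_concat[of "n-k" f2' n k f1'] e kk P Q
      by auto
    ultimately show "p = q" using pc qc kk by simp
  qed
qed

lemma b_conv:
  assumes n: "n \<ge> 1"
  shows "dfac n = (\<Sum>k=1..n. b_count k * dfac (n-k))"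
proof -
  have fin: "finite (Ind k)" for k using finite_diag[of k] by (rule rev_finite_subset) (auto simp: Ind_def)
  have "dfac n = card {f. chord_diagram n f}" by (simp add: card_diag)
  also have "\<dots> = card (SIGMA k:{1..n}. Ind k \<times> {f. chord_diagram (n-k) f})"
    using diag_decomp[OF n] card_image[OF diag_decomp_inj[of n]] by simp
  also have "\<dots> = (\<Sum>k=1..n. card (Ind k \<times> {f. chord_diagram (n-k) f}))"
    by (rule card_SigmaI) (auto intro: fin finite_diag)
  also have "\<dots> = (\<Sum>k=1..n. b_count k * dfac (n-k))"
    by (simp add: card_cartesian_product card_diag b_count_def Ind_def)
  finally show ?thesis .
qed


definition rel :: "nat set \<Rightarrow> (nat \<Rightarrow> nat) \<Rightarrow> (nat \<Rightarrow> nat) \<Rightarrow> (nat \<times> nat) set" where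
  "rel A s a = {(z, s z) | z. z \<in> A} \<union> {(s z, z) | z. z \<in> A} \<union> {(z, a z) | z. z \<in> A}"

definition conn :: "nat set \<Rightarrow> (nat \<Rightarrow> nat) \<Rightarrow> (nat \<Rightarrow> nat) \<Rightarrow> bool" where
  "conn A s a \<longleftrightarrow> (\<forall>x\<in>A. \<forall>y\<in>A. (x, y) \<in> (rel A s a)\<^sup>*)"

definition CS :: "nat set \<Rightarrow> ((nat \<Rightarrow> nat) \<times> (nat \<Rightarrow> nat)) set" where
  "CS A = {(s, a). s permutes A \<and> a \<in> fpfi (A - {0}) \<and> conn A s a}"

lemma fpfi_inv: "a \<in> fpfi B \<Longrightarrow> a (a x) = x"
  unfolding fpfi_def by (cases "x \<in> B") auto

lemma fpfi_permutes: assumes "a \<in> fpfi B" shows "a permutes B"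
  unfolding permutes_def
proof (intro conjI allI impI)
  fix x assume "x \<notin> B" then show "a x = x" using assms by (auto simp: fpfi_def)
next
  fix y show "\<exists>!x. a x = y"
    by (rule ex1I[of _ "a y"]) (metis assms fpfi_inv)+
qed

lemma fpfi_finite_sub: "finite B \<Longrightarrow> finite (fpfi B)" by (rule fpfi_finite)

lemma CS_sub: "finite A \<Longrightarrow> CS A \<subseteq> {s. s permutes A} \<times> fpfi (A - {0})"
  by (auto simp: CS_def)

lemma finite_CS: "finite A \<Longrightarrow> finite (CS A)"
  by (rule finite_subset[OF CS_sub]) (auto intro: finite_permutations fpfi_finite)

abbreviation mp where "mp \<equiv> map_permutation"

lemma mp_outside: "x \<notin> h ` C \<Longrightarrow> mp C h p x = x"
  by (simp add: map_permutation_def restrict_id_def)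

lemma rel_I1: "z \<in> A \<Longrightarrow> (z, s z) \<in> rel A s a" by (auto simp: rel_def)
lemma rel_I2: "z \<in> A \<Longrightarrow> (s z, z) \<in> rel A s a" by (auto simp: rel_def)
lemma rel_I3: "z \<in> A \<Longrightarrow> (z, a z) \<in> rel A s a" by (auto simp: rel_def)
lemma rel_E: "(x, y) \<in> rel A s a \<Longrightarrow> (\<exists>z\<in>A. (x = z \<and> y = s z) \<or> (x = s z \<and> y = z) \<or> (x = z \<and> y = a z))"
  by (auto simp: rel_def)

lemma rel_transport:
  assumes bij: "bij_betw h C C'" and r: "(x, y) \<in> (rel C s a)\<^sup>*"
  shows "(h x, h y) \<in> (rel C' (mp C h s) (mp C h a))\<^sup>*"
  using r
proof (induction rule: rtrancl_induct)
  case base then show ?case by simp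
next
  case (step y z)
  have inj: "inj_on h C" and im: "h ` C = C'" using bij by (auto simp: bij_betw_def)
  from rel_E[OF step(2)] obtain w where w: "w \<in> C" and
    c: "(y = w \<and> z = s w) \<or> (y = s w \<and> z = w) \<or> (y = w \<and> z = a w)" by blast
  have hw: "h w \<in> C'" using w im by auto
  have ms: "mp C h s (h w) = h (s w)" and ma: "mp C h a (h w) = h (a w)"
    using map_permutation_apply[OF inj w] by auto
  have "(h y, h z) \<in> rel C' (mp C h s) (mp C h a)"
    using c rel_I1[OF hw, of "mp C h s" "mp C h a"] rel_I2[OF hw, of "mp C h s" "mp C h a"]
      rel_I3[OF hw, of "mp C h a" "mp C h s"] ms ma by auto
  then show ?case using step(3) by simp
qed

lemma mp_inv:
  assumes bij: "bij_betw h C C'" and p: "p permutes C"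
  shows "mp C' (inv_into C h) (mp C h p) = p"
proof -
  have "mp C' (inv_into C h) (mp C h p) = mp C (inv_into C h \<circ> h) p"
    by (rule map_permutation_compose[OF bij inj_on_inv_into]) (use bij in \<open>auto simp: bij_betw_def\<close>)
  also have "\<dots> = mp C id p"
    unfolding o_def id_def
    by (rule sym, intro map_permutation_cong_strong inv_into_f_f[symmetric]
          bij_betw_imp_inj_on[OF bij]) (use p in \<open>auto simp: permutes_image\<close>)
  also have "\<dots> = p" using p by simp
  finally show ?thesis .
qed

lemma CS_transport:
  assumes bij: "bij_betw h C C'" and C0: "0 \<in> C" and h0: "h 0 = 0" and sa: "(s, a) \<in> CS C"
  shows "(mp C h s, mp C h a) \<in> CS C'"
proof -
  have s: "s permutes C" and a: "a \<in> fpfi (C - {0})" and cn: "conn C s a" using sa by (auto simp: CS_def)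
  have inj: "inj_on h C" and im: "h ` C = C'" using bij by (auto simp: bij_betw_def)
  have ap: "a permutes C" using fpfi_permutes[OF a] permutes_subset by blast
  have s': "mp C h s permutes C'" by (rule map_permutation_permutes[OF bij s])
  have app: "mp C h a (h x) = h (a x)" if "x \<in> C" for x using map_permutation_apply[OF inj that] by simp
  have aC: "a x \<in> C" if "x \<in> C" for x using ap that by (simp add: permutes_in_image)
  have a': "mp C h a \<in> fpfi (C' - {0})" unfolding fpfi_def
  proof (intro CollectI conjI ballI allI impI)
    fix y assume y: "y \<in> C' - {0}"
    then obtain x where x: "x \<in> C" "y = h x" using im by auto
    have x0: "x \<noteq> 0" using x y h0 by (metis DiffD2 singletonI)
    have ax: "a x \<in> C - {0}" "a x \<noteq> x" "a (a x) = x" using a x x0 by (auto simp: fpfi_def)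
    have "h (a x) \<noteq> h x" using ax x inj by (metis DiffD1 inj_on_eq_iff)
    moreover have "h (a x) \<noteq> 0" using ax inj h0 C0 by (metis DiffD1 DiffD2 inj_on_eq_iff singletonI)
    ultimately show "mp C h a y \<in> C' - {0}" "mp C h a y \<noteq> y" "mp C h a (mp C h a y) = y"
      using x ax app im by auto
  next
    fix y assume y: "y \<notin> C' - {0}"
    show "mp C h a y = y"
    proof (cases "y = 0")
      case True then show ?thesis using app[OF C0] h0 a by (simp add: fpfi_def)
    next
      case False then show ?thesis using y im mp_outside by auto
    qed
  qed
  have c': "conn C' (mp C h s) (mp C h a)" unfolding conn_def
  proof (intro ballI)
    fix x' y' assume "x' \<in> C'" "y' \<in> C'"
    then obtain x y where "x \<in> C" "y \<in> C" "x' = h x" "y' = h y" using im by auto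
    then show "(x', y') \<in> (rel C' (mp C h s) (mp C h a))\<^sup>*"
      using rel_transport[OF bij] cn by (auto simp: conn_def)
  qed
  show ?thesis using s' a' c' by (simp add: CS_def)
qed

lemma card_CS_le:
  assumes bij: "bij_betw h C C'" and C0: "0 \<in> C" and h0: "h 0 = 0" and fin: "finite C'"
  shows "card (CS C) \<le> card (CS C')"
proof (rule card_inj_on_le)
  show "(\<lambda>(s,a). (mp C h s, mp C h a)) ` CS C \<subseteq> CS C'"
    using CS_transport[OF bij C0 h0] by auto
  show "inj_on (\<lambda>(s,a). (mp C h s, mp C h a)) (CS C)"
  proof (rule inj_onI, clarify)
    fix s a s' a' assume 1: "(s,a) \<in> CS C" "(s',a') \<in> CS C" "mp C h s = mp C h s'" "mp C h a = mp C h a'"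
    have p: "s permutes C" "s' permutes C" "a permutes C" "a' permutes C"
      using 1 fpfi_permutes permutes_subset by (auto simp: CS_def) blast+
    show "s = s' \<and> a = a'" using mp_inv[OF bij p(1)] mp_inv[OF bij p(2)] mp_inv[OF bij p(3)] mp_inv[OF bij p(4)] 1
      by metis
  qed
  show "finite (CS C')" using finite_CS[OF fin] .
qed

lemma card_CS_eq:
  assumes bij: "bij_betw h C C'" and C0: "0 \<in> C" and h0: "h 0 = 0" and fin: "finite C"
  shows "card (CS C) = card (CS C')"
proof (rule antisym)
  have fin': "finite C'" using bij fin bij_betw_finite by blast
  show "card (CS C) \<le> card (CS C')" by (rule card_CS_le[OF bij C0 h0 fin'])
  have bij': "bij_betw (inv_into C h) C' C" by (rule bij_betw_inv_into[OF bij])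
  have C0': "0 \<in> C'" using bij C0 h0 by (metis bij_betwE)
  have h0': "inv_into C h 0 = 0" using h0 C0 bij by (metis bij_betw_inv_into_left)
  show "card (CS C') \<le> card (CS C)" by (rule card_CS_le[OF bij' C0' h0' fin])
qed

definition ell :: "nat \<Rightarrow> nat" where "ell c = card (CS {0..<c})"

lemma card_CS_ell:
  assumes fin: "finite C" and C0: "0 \<in> C"
  shows "card (CS C) = ell (card C)"
proof -
  obtain h0 where h0: "bij_betw h0 C {0..<card C}" using ex_bij_betw_finite_nat[OF fin] by blast
  define h where "h = Transposition.transpose 0 (h0 0) \<circ> h0"
  have "h0 0 \<in> {0..<card C}" using h0 C0 by (metis bij_betwE)
  moreover have "0 \<in> {0..<card C}" using calculation by auto
  ultimately have "Transposition.transpose 0 (h0 0) permutes {0..<card C}" by (intro permutes_swap_id)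
  then have "bij_betw (Transposition.transpose 0 (h0 0)) {0..<card C} {0..<card C}" by (rule permutes_imp_bij)
  then have hb: "bij_betw h C {0..<card C}" unfolding h_def using h0 by (rule bij_betw_trans[rotated])
  have hz: "h 0 = 0" by (simp add: h_def)
  show ?thesis using card_CS_eq[OF hb C0 hz fin] by (simp add: ell_def)
qed


definition rst :: "nat set \<Rightarrow> (nat \<Rightarrow> nat) \<Rightarrow> nat \<Rightarrow> nat" where
  "rst C f = (\<lambda>x. if x \<in> C then f x else x)"
definition compo :: "nat set \<Rightarrow> (nat \<Rightarrow> nat) \<Rightarrow> (nat \<Rightarrow> nat) \<Rightarrow> nat set" where
  "compo A s a = {y. (0, y) \<in> (rel A s a)\<^sup>*}"
definition TS :: "nat set \<Rightarrow> ((nat \<Rightarrow> nat) \<times> (nat \<Rightarrow> nat)) set" where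
  "TS A = {s. s permutes A} \<times> fpfi (A - {0})"
definition FS :: "nat set \<Rightarrow> ((nat \<Rightarrow> nat) \<times> (nat \<Rightarrow> nat)) set" where
  "FS D = {s. s permutes D} \<times> fpfi D"

lemma rst_permutes:
  assumes p: "p permutes A" and fin: "finite C" and CA: "C \<subseteq> A" and cl: "\<forall>x\<in>C. p x \<in> C"
  shows "rst C p permutes C"
proof (rule inj_imp_permutes[OF _ fin])
  show "inj_on (rst C p) C" using permutes_inj[OF p] by (auto simp: rst_def inj_on_def inj_def)
  show "\<And>x. x \<in> C \<Longrightarrow> rst C p x \<in> C" using cl by (simp add: rst_def)
  show "\<And>i. i \<notin> C \<Longrightarrow> rst C p i = i" by (simp add: rst_def)
qed

lemma rel_sub:
  assumes "s permutes A" "a permutes A"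
  shows "rel A s a \<subseteq> A \<times> A"
  using assms by (auto simp: rel_def permutes_in_image)

lemma rel_sym:
  assumes a: "a permutes A" and inv: "\<And>z. a (a z) = z" and r: "(x, y) \<in> rel A s a"
  shows "(y, x) \<in> rel A s a"
proof -
  from rel_E[OF r] obtain w where w: "w \<in> A" and
    c: "(x = w \<and> y = s w) \<or> (x = s w \<and> y = w) \<or> (x = w \<and> y = a w)" by blast
  have aw: "a w \<in> A" using a w by (simp add: permutes_in_image)
  show ?thesis using c rel_I1[OF w] rel_I2[OF w] rel_I3[OF aw, of a s] inv[of w] by auto
qed

lemma rtrancl_rel_sym:
  assumes a: "a permutes A" and inv: "\<And>z. a (a z) = z" and r: "(x, y) \<in> (rel A s a)\<^sup>*"
  shows "(y, x) \<in> (rel A s a)\<^sup>*"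
proof -
  have "sym (rel A s a)" using rel_sym[OF a inv] by (auto simp: sym_def)
  then have "sym ((rel A s a)\<^sup>*)" by (rule sym_rtrancl)
  then show ?thesis using r by (auto simp: sym_def)
qed

lemma conn_from0:
  assumes a: "a permutes A" and inv: "\<And>z. a (a z) = z" and r: "\<forall>y\<in>A. (0, y) \<in> (rel A s a)\<^sup>*"
  shows "conn A s a"
  unfolding conn_def
proof (intro ballI)
  fix x y assume "x \<in> A" "y \<in> A"
  then have "(x, 0) \<in> (rel A s a)\<^sup>*" "(0, y) \<in> (rel A s a)\<^sup>*" using r rtrancl_rel_sym[OF a inv] by auto
  then show "(x, y) \<in> (rel A s a)\<^sup>*" by simp
qed

context
  fixes A :: "nat set" and s a :: "nat \<Rightarrow> nat"
  assumes finA: "finite A" and A0: "0 \<in> A" and TSA: "(s, a) \<in> TS A"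
begin

lemma sp: "s permutes A" using TSA by (simp add: TS_def)
lemma afp: "a \<in> fpfi (A - {0})" using TSA by (simp add: TS_def)
lemma ap: "a permutes A" using fpfi_permutes[OF afp] permutes_subset by blast
lemma ainv: "a (a z) = z" using fpfi_inv[OF afp] .
lemma a0: "a 0 = 0" using afp by (simp add: fpfi_def)

lemma comp_sub: "compo A s a \<subseteq> A"
proof
  fix y assume "y \<in> compo A s a"
  then have "(0, y) \<in> (rel A s a)\<^sup>*" by (simp add: compo_def)
  then show "y \<in> A"
    by (induction rule: rtrancl_induct) (use A0 rel_sub[OF sp ap] in auto)
qed

lemma comp0: "0 \<in> compo A s a" by (simp add: compo_def)

lemma comp_cl:
  assumes z: "z \<in> A" "z \<in> compo A s a"
  shows "s z \<in> compo A s a" "a z \<in> compo A s a"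
  using z rel_I1[OF z(1), of s a] rel_I3[OF z(1), of a s]
  by (auto simp: compo_def intro: rtrancl_into_rtrancl)

lemma comp_cocl:
  assumes z: "z \<in> A" "z \<notin> compo A s a"
  shows "s z \<notin> compo A s a" "a z \<notin> compo A s a"
proof -
  show "s z \<notin> compo A s a"
    using z rel_I2[OF z(1), of s a] by (auto simp: compo_def intro: rtrancl_into_rtrancl)
  have az: "a z \<in> A" using ap z by (simp add: permutes_in_image)
  show "a z \<notin> compo A s a"
    using z rel_I3[OF az, of a s] ainv[of z] by (auto simp: compo_def intro: rtrancl_into_rtrancl)
qed

lemma decomp_parts:
  defines "K \<equiv> compo A s a"
  shows "(rst K s, rst K a) \<in> CS K" "(rst (A-K) s, rst (A-K) a) \<in> FS (A - K)"
    "s = rst K s \<circ> rst (A-K) s" "a = rst K a \<circ> rst (A-K) a" "K \<subseteq> A" "0 \<in> K"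
proof -
  have KA: "K \<subseteq> A" and K0: "0 \<in> K" using comp_sub comp0 by (auto simp: K_def)
  have finK: "finite K" using KA finA finite_subset by blast
  have sK: "rst K s permutes K" using rst_permutes[OF sp finK KA] comp_cl KA by (auto simp: K_def)
  have sD: "rst (A-K) s permutes (A-K)" using rst_permutes[OF sp _ _] finA comp_cocl sp
    by (auto simp: K_def permutes_in_image)
  have aK: "rst K a \<in> fpfi (K - {0})" using afp comp_cl KA K0
    by (auto simp: K_def fpfi_def rst_def)
  have aD: "rst (A-K) a \<in> fpfi (A - K)" using afp comp_cocl K0 ap
    by (auto simp: K_def fpfi_def rst_def permutes_in_image)
  have cK: "conn K (rst K s) (rst K a)"
  proof (rule conn_from0)
    show "rst K a permutes K" using fpfi_permutes[OF aK] permutes_subset by blast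
    show "\<And>z. rst K a (rst K a z) = z" using fpfi_inv[OF aK] .
    show "\<forall>y\<in>K. (0, y) \<in> (rel K (rst K s) (rst K a))\<^sup>*"
    proof
      fix y assume "y \<in> K"
      then have "(0, y) \<in> (rel A s a)\<^sup>*" by (simp add: K_def compo_def)
      then show "(0, y) \<in> (rel K (rst K s) (rst K a))\<^sup>*"
      proof (induction rule: rtrancl_induct)
        case base then show ?case by simp
      next
        case (step y z)
        have yK: "y \<in> K" using step(1) by (simp add: K_def compo_def)
        from rel_E[OF step(2)] obtain w where w: "w \<in> A" and
          c: "(y = w \<and> z = s w) \<or> (y = s w \<and> z = w) \<or> (y = w \<and> z = a w)" by blast
        have wK: "w \<in> K" using c yK comp_cocl[OF w] by (auto simp: K_def)
        have "(y, z) \<in> rel K (rst K s) (rst K a)"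
          using c wK rel_I1[OF wK, of "rst K s" "rst K a"] rel_I2[OF wK, of "rst K s" "rst K a"]
            rel_I3[OF wK, of "rst K a" "rst K s"] by (auto simp: rst_def)
        then show ?case using step(3) by simp
      qed
    qed
  qed
  show "(rst K s, rst K a) \<in> CS K" using sK aK cK by (simp add: CS_def)
  show "(rst (A-K) s, rst (A-K) a) \<in> FS (A - K)" using sD aD by (simp add: FS_def)
  show "s = rst K s \<circ> rst (A-K) s" using sp comp_cocl KA
    by (auto simp: fun_eq_iff rst_def permutes_not_in permutes_in_image K_def)
  show "a = rst K a \<circ> rst (A-K) a" using ap comp_cocl KA
    by (auto simp: fun_eq_iff rst_def permutes_not_in permutes_in_image K_def)
  show "K \<subseteq> A" "0 \<in> K" using KA K0 .
qed

end

lemma glue_parts: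
  assumes finA: "finite A" and CA: "C \<subseteq> A" and C0: "0 \<in> C"
    and c1: "(s1, a1) \<in> CS C" and c2: "(s2, a2) \<in> FS (A - C)"
  shows "(s1 \<circ> s2, a1 \<circ> a2) \<in> TS A \<and> compo A (s1 \<circ> s2) (a1 \<circ> a2) = C \<and>
     rst C (s1 \<circ> s2) = s1 \<and> rst (A-C) (s1 \<circ> s2) = s2 \<and> rst C (a1 \<circ> a2) = a1 \<and> rst (A-C) (a1 \<circ> a2) = a2"
proof -
  let ?s = "s1 \<circ> s2" and ?a = "a1 \<circ> a2"
  have s1: "s1 permutes C" and a1: "a1 \<in> fpfi (C - {0})" and cn: "conn C s1 a1" using c1 by (auto simp: CS_def)
  have s2: "s2 permutes (A - C)" and a2: "a2 \<in> fpfi (A - C)" using c2 by (auto simp: FS_def)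
  have a1p: "a1 permutes C" using fpfi_permutes[OF a1] permutes_subset by blast
  have a2p: "a2 permutes (A - C)" using fpfi_permutes[OF a2] .
  have sv: "?s x = (if x \<in> C then s1 x else s2 x)" for x
  proof (cases "x \<in> A - C")
    case True
    then have "s2 x \<in> A - C" using s2 by (metis permutes_in_image)
    then show ?thesis using True s1 by (auto simp: permutes_not_in)
  next
    case False then show ?thesis using s1 s2 by (auto simp: permutes_not_in)
  qed
  have av: "?a x = (if x \<in> C then a1 x else a2 x)" for x
  proof (cases "x \<in> A - C")
    case True
    then have "a2 x \<in> A - C" using a2p by (metis permutes_in_image)
    then show ?thesis using True a1p by (auto simp: permutes_not_in)
  next
    case False then show ?thesis using a1p a2p by (auto simp: permutes_not_in)
  qed
  have sp: "?s permutes A" using permutes_compose[OF permutes_subset[OF s2] permutes_subset[OF s1 CA]] by auto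
  have A1: "\<forall>x\<in>C - {0}. a1 x \<in> C - {0} \<and> a1 x \<noteq> x \<and> a1 (a1 x) = x" "\<forall>x. x \<notin> C - {0} \<longrightarrow> a1 x = x"
    using a1 by (auto simp: fpfi_def)
  have A2: "\<forall>x\<in>A - C. a2 x \<in> A - C \<and> a2 x \<noteq> x \<and> a2 (a2 x) = x" "\<forall>x. x \<notin> A - C \<longrightarrow> a2 x = x"
    using a2 by (auto simp: fpfi_def)
  have P1: "\<forall>x\<in>A - {0}. ?a x \<in> A - {0} \<and> ?a x \<noteq> x \<and> ?a (?a x) = x"
  proof
    fix x assume x: "x \<in> A - {0}"
    show "?a x \<in> A - {0} \<and> ?a x \<noteq> x \<and> ?a (?a x) = x"
    proof (cases "x \<in> C")
      case True
      then have xc: "x \<in> C - {0}" using x by simp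
      then have h: "a1 x \<in> C - {0}" "a1 x \<noteq> x" "a1 (a1 x) = x" using A1 by auto
      have e1: "?a x = a1 x" using av[of x] True by simp
      have e2: "?a (a1 x) = a1 (a1 x)" using av[of "a1 x"] h by simp
      show ?thesis using h e1 e2 CA by auto
    next
      case False
      then have x2: "x \<in> A - C" using x by simp
      then have "a2 x \<in> A - C" using A2 by blast
      then have n0: "a2 x \<noteq> 0" using C0 by (metis DiffD2)
      have h: "a2 x \<in> A - C" "a2 x \<noteq> x" "a2 (a2 x) = x" using A2 x2 by auto
      have e1: "?a x = a2 x" using av[of x] False by simp
      have e2: "?a (a2 x) = a2 (a2 x)" using av[of "a2 x"] h by simp
      show ?thesis using h e1 e2 n0 by auto
    qed
  qed
  have P2: "\<forall>x. x \<notin> A - {0} \<longrightarrow> ?a x = x"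
  proof (intro allI impI)
    fix x assume x: "x \<notin> A - {0}"
    show "?a x = x"
    proof (cases "x = 0")
      case True then show ?thesis using A1(2) A2(2) C0 av by auto
    next
      case False then have "x \<notin> A" using x by simp
      then show ?thesis using A1(2) A2(2) CA av by auto
    qed
  qed
  have ap: "?a \<in> fpfi (A - {0})" unfolding fpfi_def using P1 P2 by blast
  have sC: "\<forall>x\<in>C. ?s x \<in> C" using s1 sv by (auto simp: permutes_in_image)
  have sD: "\<forall>x\<in>A-C. ?s x \<in> A-C"
  proof
    fix x assume x: "x \<in> A - C"
    then have "s2 x \<in> A - C" using s2 by (metis permutes_in_image)
    then show "?s x \<in> A - C" using sv x by auto
  qed
  have aC: "\<forall>x\<in>C. ?a x \<in> C" using a1p av by (auto simp: permutes_in_image)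
  have c_sub: "compo A ?s ?a \<subseteq> C"
  proof
    fix y assume "y \<in> compo A ?s ?a"
    then have "(0, y) \<in> (rel A ?s ?a)\<^sup>*" by (simp add: compo_def)
    then show "y \<in> C"
    proof (induction rule: rtrancl_induct)
      case base then show ?case using C0 .
    next
      case (step y z)
      from rel_E[OF step(2)] obtain w where w: "w \<in> A" and
        c: "(y = w \<and> z = ?s w) \<or> (y = ?s w \<and> z = w) \<or> (y = w \<and> z = ?a w)" by blast
      show ?case
      proof (cases "w \<in> C")
        case True then show ?thesis using c sC aC by auto
      next
        case False then show ?thesis using c sD w step(3) by auto
      qed
    qed
  qed
  have c_sup: "C \<subseteq> compo A ?s ?a"
  proof
    fix y assume y: "y \<in> C"
    have "(0, y) \<in> (rel C s1 a1)\<^sup>*" using cn C0 y by (simp add: conn_def)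
    moreover have "rel C s1 a1 \<subseteq> rel A ?s ?a"
    proof
      fix p assume "p \<in> rel C s1 a1"
      then obtain x y where p: "p = (x, y)" and "(x, y) \<in> rel C s1 a1" by (cases p) auto
      from rel_E[OF this(2)] obtain w where w: "w \<in> C" and
        c: "(x = w \<and> y = s1 w) \<or> (x = s1 w \<and> y = w) \<or> (x = w \<and> y = a1 w)" by blast
      have wA: "w \<in> A" using w CA by auto
      show "p \<in> rel A ?s ?a" using c p rel_I1[OF wA, of ?s ?a] rel_I2[OF wA, of ?s ?a] rel_I3[OF wA, of ?a ?s]
        sv av w by auto
    qed
    ultimately show "y \<in> compo A ?s ?a" using rtrancl_mono by (auto simp: compo_def)
  qed
  have r1: "rst C ?s = s1" using s1 sv by (auto simp: rst_def fun_eq_iff permutes_not_in)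
  have r2: "rst (A-C) ?s = s2" using s2 sv by (auto simp: rst_def fun_eq_iff permutes_not_in)
  have r3: "rst C ?a = a1" using a1p av by (auto simp: rst_def fun_eq_iff permutes_not_in)
  have r4: "rst (A-C) ?a = a2" using a2p av by (auto simp: rst_def fun_eq_iff permutes_not_in)
  show ?thesis using sp ap c_sub c_sup r1 r2 r3 r4 by (auto simp: TS_def)
qed

lemma TS_decomp:
  assumes finA: "finite A" and A0: "0 \<in> A"
  shows "card (TS A) = (\<Sum>C\<in>{C. C \<subseteq> A \<and> 0 \<in> C}. card (CS C) * card (FS (A - C)))"
proof -
  let ?S = "SIGMA C:{C. C \<subseteq> A \<and> 0 \<in> C}. CS C \<times> FS (A - C)"
  let ?F = "\<lambda>(C, (p1, p2)). (fst p1 \<circ> fst p2, snd p1 \<circ> snd p2)"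
  have img: "?F ` ?S = TS A"
  proof
    show "?F ` ?S \<subseteq> TS A"
    proof
      fix x assume "x \<in> ?F ` ?S"
      then obtain C s1 a1 s2 a2 where "C \<subseteq> A" "0 \<in> C" "(s1,a1) \<in> CS C" "(s2,a2) \<in> FS (A - C)"
        "x = (s1 \<circ> s2, a1 \<circ> a2)" by auto
      then show "x \<in> TS A" using glue_parts[OF finA] by blast
    qed
    show "TS A \<subseteq> ?F ` ?S"
    proof
      fix x assume x: "x \<in> TS A"
      obtain s a where xs: "x = (s, a)" by (cases x)
      then have T: "(s, a) \<in> TS A" using x by simp
      let ?K = "compo A s a"
      note D = decomp_parts[OF finA A0 T]
      show "x \<in> ?F ` ?S"
      proof (rule image_eqI[of _ _ "(?K, ((rst ?K s, rst ?K a), (rst (A - ?K) s, rst (A - ?K) a)))"])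
        show "x = ?F (?K, ((rst ?K s, rst ?K a), (rst (A - ?K) s, rst (A - ?K) a)))"
          using D(3,4) xs by simp
        show "(?K, ((rst ?K s, rst ?K a), (rst (A - ?K) s, rst (A - ?K) a))) \<in> ?S"
          using D(1,2,5,6) by simp
      qed
    qed
  qed
  have inj: "inj_on ?F ?S"
  proof (rule inj_onI)
    fix p q assume p: "p \<in> ?S" and q: "q \<in> ?S" and e: "?F p = ?F q"
    obtain C s1 a1 s2 a2 where pc: "p = (C, ((s1,a1),(s2,a2)))" by (metis prod.exhaust)
    obtain C' s1' a1' s2' a2' where qc: "q = (C', ((s1',a1'),(s2',a2')))" by (metis prod.exhaust)
    have P: "C \<subseteq> A" "0 \<in> C" "(s1,a1) \<in> CS C" "(s2,a2) \<in> FS (A - C)" using p pc by auto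
    have Q: "C' \<subseteq> A" "0 \<in> C'" "(s1',a1') \<in> CS C'" "(s2',a2') \<in> FS (A - C')" using q qc by auto
    have e1: "s1 \<circ> s2 = s1' \<circ> s2'" "a1 \<circ> a2 = a1' \<circ> a2'" using e pc qc by auto
    note G1 = glue_parts[OF finA P]
    note G2 = glue_parts[OF finA Q]
    have "C = C'" using G1 G2 e1 by metis
    then show "p = q" using G1 G2 e1 pc qc by metis
  qed
  have finS: "finite {C. C \<subseteq> A \<and> 0 \<in> C}" using finA by auto
  have fin2: "finite (CS C \<times> FS (A - C))" if "C \<subseteq> A" for C
  proof -
    have "finite C" using that finA finite_subset by blast
    moreover have "finite (FS (A - C))" using finA by (auto simp: FS_def intro: finite_permutations fpfi_finite)
    ultimately show ?thesis using finite_CS by blast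
  qed
  have "card (TS A) = card ?S" using card_image[OF inj] img by simp
  also have "\<dots> = (\<Sum>C\<in>{C. C \<subseteq> A \<and> 0 \<in> C}. card (CS C \<times> FS (A - C)))"
    by (rule card_SigmaI[OF finS]) (use fin2 in auto)
  also have "\<dots> = (\<Sum>C\<in>{C. C \<subseteq> A \<and> 0 \<in> C}. card (CS C) * card (FS (A - C)))"
    by (simp add: card_cartesian_product)
  finally show ?thesis .
qed


definition FF :: "nat \<Rightarrow> nat" where "FF d = fact d * fpfc d"

lemma card_TS: "0 \<in> A \<Longrightarrow> finite A \<Longrightarrow> card (TS A) = fact (card A) * fpfc (card A - 1)"
  by (simp add: TS_def card_cartesian_product card_permutations fpfi_card)

lemma card_FS: "finite D \<Longrightarrow> card (FS D) = FF (card D)"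
  by (simp add: FS_def FF_def card_cartesian_product card_permutations fpfi_card)

lemma sum_pow_group:
  assumes fin: "finite B"
  shows "(\<Sum>C\<in>Pow B. f (card C)) = (\<Sum>j=0..card B. (card B choose j) * f j)"
proof -
  have "(\<Sum>C\<in>Pow B. f (card C)) = (\<Sum>j\<in>{0..card B}. \<Sum>C\<in>{C. C \<in> Pow B \<and> card C = j}. f (card C))"
    by (rule sum.group[symmetric]) (use fin in \<open>auto intro: card_mono\<close>)
  also have "\<dots> = (\<Sum>j\<in>{0..card B}. (card B choose j) * f j)"
  proof (rule sum.cong[OF refl])
    fix j
    have "(\<Sum>C\<in>{C. C \<in> Pow B \<and> card C = j}. f (card C)) = (\<Sum>C\<in>{C. C \<subseteq> B \<and> card C = j}. f j)"
      by (rule sum.cong) auto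
    also have "\<dots> = card {C. C \<subseteq> B \<and> card C = j} * f j" by simp
    also have "\<dots> = (card B choose j) * f j" using n_subsets[OF fin] by simp
    finally show "(\<Sum>C\<in>{C. C \<in> Pow B \<and> card C = j}. f (card C)) = (card B choose j) * f j" .
  qed
  finally show ?thesis .
qed

lemma TS_sum:
  fixes A :: "nat set"
  assumes fin: "finite A" and A0: "0 \<in> A"
  shows "fact (card A) * fpfc (card A - 1) =
    (\<Sum>j=0..card A - 1. (card A - 1 choose j) * (ell (j+1) * FF (card A - 1 - j)))"
proof -
  let ?B = "A - {0}"
  have cB: "card ?B = card A - 1" using fin A0 by simp
  have finB: "finite ?B" using fin by simp
  have "fact (card A) * fpfc (card A - 1) = card (TS A)" using card_TS[OF A0 fin] by simp
  also have "\<dots> = (\<Sum>C\<in>{C. C \<subseteq> A \<and> 0 \<in> C}. card (CS C) * card (FS (A - C)))"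
    by (rule TS_decomp[OF fin A0])
  also have "\<dots> = (\<Sum>C\<in>{C. C \<subseteq> A \<and> 0 \<in> C}. ell (card C) * FF (card A - card C))"
  proof (rule sum.cong[OF refl])
    fix C assume C: "C \<in> {C. C \<subseteq> A \<and> 0 \<in> C}"
    have fC: "finite C" using C fin finite_subset by auto
    show "card (CS C) * card (FS (A - C)) = ell (card C) * FF (card A - card C)"
      using card_CS_ell[OF fC] card_FS[of "A - C"] C fin fC by (simp add: card_Diff_subset)
  qed
  also have "\<dots> = (\<Sum>C0\<in>Pow ?B. ell (card (insert 0 C0)) * FF (card A - card (insert 0 C0)))"
  proof (rule sum.reindex_bij_betw[symmetric])
    show "bij_betw (insert 0) (Pow ?B) {C. C \<subseteq> A \<and> 0 \<in> C}"
    proof (rule bij_betw_byWitness[of _ "\<lambda>C. C - {0}"])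
      show "\<forall>a\<in>Pow ?B. insert 0 a - {0} = a" by auto
      show "\<forall>a'\<in>{C. C \<subseteq> A \<and> 0 \<in> C}. insert 0 (a' - {0}) = a'" by auto
      show "insert 0 ` Pow ?B \<subseteq> {C. C \<subseteq> A \<and> 0 \<in> C}" using A0 by auto
      show "(\<lambda>C. C - {0}) ` {C. C \<subseteq> A \<and> 0 \<in> C} \<subseteq> Pow ?B" by auto
    qed
  qed
  also have "\<dots> = (\<Sum>C0\<in>Pow ?B. ell (card C0 + 1) * FF (card ?B - card C0))"
  proof (rule sum.cong[OF refl])
    fix C0 assume "C0 \<in> Pow ?B"
    then have "C0 \<subseteq> ?B" "finite C0" "0 \<notin> C0" using finB finite_subset by auto
    then show "ell (card (insert 0 C0)) * FF (card A - card (insert 0 C0)) = ell (card C0 + 1) * FF (card ?B - card C0)"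
      using cB by simp
  qed
  also have "\<dots> = (\<Sum>j=0..card ?B. (card ?B choose j) * (ell (j+1) * FF (card ?B - j)))"
    by (rule sum_pow_group[OF finB])
  finally show ?thesis using cB by simp
qed


lemma edges_aux:
  "\<forall>B. finite B \<longrightarrow> card B = n \<longrightarrow> (\<forall>x\<in>B. a x \<in> B \<and> a x \<noteq> x \<and> a (a x) = x) \<longrightarrow>
     2 * card {{x, a x} | x. x \<in> B} = n"
proof (induction n rule: less_induct)
  case (less n)
  show ?case
  proof (intro allI impI)
    fix B :: "'a set" assume fB: "finite B" and cB: "card B = n" and inv: "\<forall>x\<in>B. a x \<in> B \<and> a x \<noteq> x \<and> a (a x) = x"
    show "2 * card {{x, a x} | x. x \<in> B} = n"
    proof (cases "B = {}")
      case True then show ?thesis using cB by simp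
    next
      case False
      then obtain b where b: "b \<in> B" by auto
      let ?B' = "B - {b, a b}"
      have ab: "a b \<in> B" "a b \<noteq> b" "a (a b) = b" using inv b by auto
      have cB': "card ?B' = n - 2" using fB cB b ab by (simp add: card_Diff_subset)
      have lt: "n - 2 < n" using b fB cB by (cases n) (auto simp: card_gt_0_iff)
      have inv': "\<forall>x\<in>?B'. a x \<in> ?B' \<and> a x \<noteq> x \<and> a (a x) = x"
      proof
        fix x assume x: "x \<in> ?B'"
        then have h: "a x \<in> B" "a x \<noteq> x" "a (a x) = x" using inv by auto
        have "a x \<noteq> b"
        proof assume "a x = b" then have "x = a b" using h(3) by auto then show False using x by auto qed
        moreover have "a x \<noteq> a b"
        proof assume "a x = a b" then have "x = b" using h(3) ab(3) by metis then show False using x by auto qed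
        ultimately show "a x \<in> ?B' \<and> a x \<noteq> x \<and> a (a x) = x" using h by auto
      qed
      have IH: "2 * card {{x, a x} | x. x \<in> ?B'} = n - 2"
        using less.IH[OF lt, rule_format, of ?B'] fB cB' inv' by simp
      have eq: "{{x, a x} | x. x \<in> B} = insert {b, a b} {{x, a x} | x. x \<in> ?B'}"
      proof
        show "{{x, a x} | x. x \<in> B} \<subseteq> insert {b, a b} {{x, a x} | x. x \<in> ?B'}"
        proof
          fix e assume "e \<in> {{x, a x} | x. x \<in> B}"
          then obtain x where x: "x \<in> B" "e = {x, a x}" by auto
          show "e \<in> insert {b, a b} {{x, a x} | x. x \<in> ?B'}"
          proof (cases "x = b \<or> x = a b")
            case True
            then have "e = {b, a b}"
            proof
              assume "x = b" then show ?thesis using x by simp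
            next
              assume "x = a b" then show ?thesis using x ab(3) by (simp add: insert_commute)
            qed
            then show ?thesis by simp
          next
            case False then have "x \<in> ?B'" using x by simp then show ?thesis using x by blast
          qed
        qed
        show "insert {b, a b} {{x, a x} | x. x \<in> ?B'} \<subseteq> {{x, a x} | x. x \<in> B}"
          using b by blast
      qed
      have nin: "{b, a b} \<notin> {{x, a x} | x. x \<in> ?B'}"
      proof
        assume "{b, a b} \<in> {{x, a x} | x. x \<in> ?B'}"
        then obtain x where x: "x \<in> ?B'" "{b, a b} = {x, a x}" by auto
        then have "x \<in> {b, a b}" by simp
        then show False using x by auto
      qed
      have fin': "finite {{x, a x} | x. x \<in> ?B'}" using fB by simp
      have "card {{x, a x} | x. x \<in> B} = Suc (card {{x, a x} | x. x \<in> ?B'})"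
        unfolding eq using card_insert_disjoint[OF fin' nin] by simp
      moreover have "n \<ge> 2"
      proof -
        have "card {b, a b} \<le> card B" using fB b ab(1) by (intro card_mono) auto
        then show ?thesis using ab(2) cB by simp
      qed
      ultimately show ?thesis using IH by linarith
    qed
  qed
qed

lemma edges:
  "finite B \<Longrightarrow> (\<forall>x\<in>B. a x \<in> B \<and> a x \<noteq> x \<and> a (a x) = x) \<Longrightarrow> 2 * card {{x, a x} | x. x \<in> B} = card B"
  using edges_aux by blast

lemma rel_eq: "rel {0..<m} s a = {(z, s z) | z. z < m} \<union> {(s z, z) | z. z < m} \<union> {(z, a z) | z. z < m}"
  by (auto simp: rel_def)

lemma fpfi_alpha:
  assumes m: "0 < m"
  shows "a \<in> fpfi ({0..<m} - {0}) \<longleftrightarrow>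
     a permutes {0..<m} \<and> (\<forall>x<m. a (a x) = x) \<and> a 0 = 0 \<and> (\<forall>x<m. a x = x \<longleftrightarrow> x = 0)"
proof
  assume a: "a \<in> fpfi ({0..<m} - {0})"
  then show "a permutes {0..<m} \<and> (\<forall>x<m. a (a x) = x) \<and> a 0 = 0 \<and> (\<forall>x<m. a x = x \<longleftrightarrow> x = 0)"
    using fpfi_permutes[OF a] permutes_subset[of a "{0..<m} - {0}" "{0..<m}"] fpfi_inv[OF a]
    by (auto simp: fpfi_def)
next
  assume h: "a permutes {0..<m} \<and> (\<forall>x<m. a (a x) = x) \<and> a 0 = 0 \<and> (\<forall>x<m. a x = x \<longleftrightarrow> x = 0)"
  have P1: "\<forall>x\<in>{0..<m} - {0}. a x \<in> {0..<m} - {0} \<and> a x \<noteq> x \<and> a (a x) = x"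
  proof
    fix x assume x: "x \<in> {0..<m} - {0}"
    have "a x < m" using h x by (metis atLeastLessThan_iff DiffD1 permutes_in_image zero_le)
    moreover have "a x \<noteq> 0" using h x by (metis DiffD1 DiffD2 atLeastLessThan_iff insertI1)
    ultimately show "a x \<in> {0..<m} - {0} \<and> a x \<noteq> x \<and> a (a x) = x" using h x by auto
  qed
  have P2: "\<forall>x. x \<notin> {0..<m} - {0} \<longrightarrow> a x = x"
    using h by (auto simp: permutes_not_in)
  show "a \<in> fpfi ({0..<m} - {0})" unfolding fpfi_def using P1 P2 by blast
qed

lemma size_calc:
  assumes m: "0 < m" and a: "a \<in> fpfi ({0..<m} - {0})"
  shows "card {{x, a x} | x. x < m} = (m + 1) div 2 \<and> odd m"
proof -
  let ?B = "{0..<m} - {0}"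
  have inv: "\<forall>x\<in>?B. a x \<in> ?B \<and> a x \<noteq> x \<and> a (a x) = x" using a by (auto simp: fpfi_def)
  have cB: "card ?B = m - 1" using m by (simp add: card_Diff_singleton)
  have e2: "2 * card {{x, a x} | x. x \<in> ?B} = m - 1" using edges[OF _ inv] cB by simp
  have a0: "a 0 = 0" using a by (simp add: fpfi_def)
  have eq: "{{x, a x} | x. x < m} = insert {0} {{x, a x} | x. x \<in> ?B}"
  proof
    show "{{x, a x} | x. x < m} \<subseteq> insert {0} {{x, a x} | x. x \<in> ?B}"
    proof
      fix e assume "e \<in> {{x, a x} | x. x < m}"
      then obtain x where x: "x < m" "e = {x, a x}" by auto
      then show "e \<in> insert {0} {{x, a x} | x. x \<in> ?B}" using a0 by (cases "x = 0") auto
    qed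
    show "insert {0} {{x, a x} | x. x \<in> ?B} \<subseteq> {{x, a x} | x. x < m}"
      using m a0 by auto
  qed
  have nin: "{0} \<notin> {{x, a x} | x. x \<in> ?B}"
  proof
    assume "{0} \<in> {{x, a x} | x. x \<in> ?B}"
    then obtain x where "x \<in> ?B" "{0} = {x, a x}" by auto
    then show False by (metis DiffD2 insertI1 singletonD)
  qed
  have "card {{x, a x} | x. x < m} = Suc (card {{x, a x} | x. x \<in> ?B})"
    using eq nin by simp
  then show ?thesis using e2 m by presburger
qed


lemma rc_iff:
  "rooted_map (m, s, a) \<and> closed_map (m, s, a) \<longleftrightarrow> 0 < m \<and> (s, a) \<in> CS {0..<m}"
proof -
  have c: "conn {0..<m} s a \<longleftrightarrow> (\<forall>x<m. \<forall>y<m. (x, y) \<in>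
        ({(z, s z) | z. z < m} \<union> {(s z, z) | z. z < m} \<union> {(z, a z) | z. z < m})\<^sup>*)"
    unfolding conn_def rel_eq by (simp add: atLeast0LessThan Ball_def)
  show ?thesis
  proof
    assume h: "rooted_map (m, s, a) \<and> closed_map (m, s, a)"
    then have m: "0 < m" by (simp add: rooted_map_def)
    have "a \<in> fpfi ({0..<m} - {0})" using h fpfi_alpha[OF m] by (auto simp: rooted_map_def closed_map_def)
    then show "0 < m \<and> (s, a) \<in> CS {0..<m}" using h m c by (auto simp: rooted_map_def CS_def)
  next
    assume h: "0 < m \<and> (s, a) \<in> CS {0..<m}"
    then have m: "0 < m" and a: "a \<in> fpfi ({0..<m} - {0})" by (auto simp: CS_def)
    show "rooted_map (m, s, a) \<and> closed_map (m, s, a)"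
      using h fpfi_alpha[OF m] a c by (auto simp: rooted_map_def closed_map_def CS_def)
  qed
qed

lemma cms_char:
  assumes n: "n \<ge> 1"
  shows "closed_maps_of_size n = (\<lambda>(s,a). (2*n-1, s, a)) ` CS {0..<2*n-1}"
proof
  show "closed_maps_of_size n \<subseteq> (\<lambda>(s,a). (2*n-1, s, a)) ` CS {0..<2*n-1}"
  proof
    fix M assume M: "M \<in> closed_maps_of_size n"
    obtain m s a where Mc: "M = (m, s, a)" by (metis prod.exhaust)
    have "rooted_map (m, s, a) \<and> closed_map (m, s, a)" using M Mc by (simp add: closed_maps_of_size_def)
    then have m: "0 < m" and cs: "(s, a) \<in> CS {0..<m}" using rc_iff by auto
    have a: "a \<in> fpfi ({0..<m} - {0})" using cs by (simp add: CS_def)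
    have "map_size (m, s, a) = n" using M Mc by (simp add: closed_maps_of_size_def)
    then have "(m + 1) div 2 = n" "odd m" using size_calc[OF m a] by (auto simp: map_size_def)
    then have "m = 2*n-1" by presburger
    then show "M \<in> (\<lambda>(s,a). (2*n-1, s, a)) ` CS {0..<2*n-1}" using Mc cs by auto
  qed
  show "(\<lambda>(s,a). (2*n-1, s, a)) ` CS {0..<2*n-1} \<subseteq> closed_maps_of_size n"
  proof
    fix M assume "M \<in> (\<lambda>(s,a). (2*n-1, s, a)) ` CS {0..<2*n-1}"
    then obtain s a where Mc: "M = (2*n-1, s, a)" and cs: "(s, a) \<in> CS {0..<2*n-1}" by auto
    have m: "0 < 2*n-1" using n by simp
    have a: "a \<in> fpfi ({0..<2*n-1} - {0})" using cs by (simp add: CS_def)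
    have "map_size M = n" using size_calc[OF m a] Mc n by (simp add: map_size_def)
    moreover have "rooted_map M \<and> closed_map M" using rc_iff m cs Mc by simp
    ultimately show "M \<in> closed_maps_of_size n" by (simp add: closed_maps_of_size_def)
  qed
qed


lemma map_iso_iff:
  "map_iso (m, s, a) (m', s', a') \<longleftrightarrow> m = m' \<and> (\<exists>\<phi>. \<phi> permutes {0..<m} \<and> \<phi> 0 = 0 \<and>
        (\<forall>x<m. \<phi> (s x) = s' (\<phi> x) \<and> \<phi> (a x) = a' (\<phi> x)))"
  by (simp add: map_iso_def)

lemma iso_refl: "map_iso (m, s, a) (m, s, a)"
  unfolding map_iso_iff by (rule conjI[OF refl], rule exI[of _ id]) auto

lemma iso_sym:
  assumes "map_iso (m, s, a) (m', s', a')"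
  shows "map_iso (m', s', a') (m, s, a)"
proof -
  from assms obtain \<phi> where mm: "m = m'" and p: "\<phi> permutes {0..<m}" and p0: "\<phi> 0 = 0"
    and c: "\<forall>x<m. \<phi> (s x) = s' (\<phi> x) \<and> \<phi> (a x) = a' (\<phi> x)" unfolding map_iso_iff by blast
  let ?\<psi> = "inv \<phi>"
  have q: "?\<psi> permutes {0..<m}" using permutes_inv[OF p] .
  have q0: "?\<psi> 0 = 0" using permutes_inverses(2)[OF p, of 0] p0 by simp
  have "\<forall>y<m. ?\<psi> (s' y) = s (?\<psi> y) \<and> ?\<psi> (a' y) = a (?\<psi> y)"
  proof (intro allI impI)
    fix y assume y: "y < m"
    have xm: "?\<psi> y < m" using q y by (metis atLeastLessThan_iff permutes_in_image zero_le)
    have px: "\<phi> (?\<psi> y) = y" using permutes_inverses(1)[OF p] by simp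
    have "?\<psi> (s' y) = ?\<psi> (\<phi> (s (?\<psi> y)))" using c xm px by metis
    moreover have "?\<psi> (a' y) = ?\<psi> (\<phi> (a (?\<psi> y)))" using c xm px by metis
    ultimately show "?\<psi> (s' y) = s (?\<psi> y) \<and> ?\<psi> (a' y) = a (?\<psi> y)"
      using permutes_inverses(2)[OF p] by simp
  qed
  then show ?thesis unfolding map_iso_iff using q q0 mm by blast
qed

lemma iso_trans:
  assumes "map_iso (m, s, a) (m', s', a')" "map_iso (m', s', a') (m'', s'', a'')"
  shows "map_iso (m, s, a) (m'', s'', a'')"
proof -
  from assms(1) obtain \<phi> where mm: "m = m'" and p: "\<phi> permutes {0..<m}" and p0: "\<phi> 0 = 0"
    and c: "\<forall>x<m. \<phi> (s x) = s' (\<phi> x) \<and> \<phi> (a x) = a' (\<phi> x)" unfolding map_iso_iff by blast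
  from assms(2) obtain \<psi> where mm': "m' = m''" and q: "\<psi> permutes {0..<m'}" and q0: "\<psi> 0 = 0"
    and c': "\<forall>x<m'. \<psi> (s' x) = s'' (\<psi> x) \<and> \<psi> (a' x) = a'' (\<psi> x)" unfolding map_iso_iff by blast
  have r: "\<psi> \<circ> \<phi> permutes {0..<m}" using permutes_compose[OF p] q mm by simp
  have "\<forall>x<m. (\<psi> \<circ> \<phi>) (s x) = s'' ((\<psi> \<circ> \<phi>) x) \<and> (\<psi> \<circ> \<phi>) (a x) = a'' ((\<psi> \<circ> \<phi>) x)"
  proof (intro allI impI)
    fix x assume x: "x < m"
    have "\<phi> x < m" using p x by (metis atLeastLessThan_iff permutes_in_image zero_le)
    then show "(\<psi> \<circ> \<phi>) (s x) = s'' ((\<psi> \<circ> \<phi>) x) \<and> (\<psi> \<circ> \<phi>) (a x) = a'' ((\<psi> \<circ> \<phi>) x)"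
      using c c' x mm by simp
  qed
  then show ?thesis unfolding map_iso_iff using r p0 q0 mm mm' by auto
qed

definition GG :: "nat \<Rightarrow> (nat \<Rightarrow> nat) set" where
  "GG m = {\<phi>. \<phi> permutes {0..<m} \<and> \<phi> 0 = 0}"

lemma GG_eq: "0 < m \<Longrightarrow> GG m = {\<phi>. \<phi> permutes ({0..<m} - {0})}"
proof -
  assume m: "0 < m"
  have "\<phi> permutes {0..<m} \<and> \<phi> 0 = 0 \<longleftrightarrow> \<phi> permutes ({0..<m} - {0})" for \<phi>
  proof
    assume h: "\<phi> permutes {0..<m} \<and> \<phi> 0 = 0"
    show "\<phi> permutes ({0..<m} - {0})" unfolding permutes_def
    proof (intro conjI allI impI)
      fix x assume "x \<notin> {0..<m} - {0}" then show "\<phi> x = x" using h by (cases "x = 0") (auto simp: permutes_not_in)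
    next
      fix y show "\<exists>!x. \<phi> x = y" using h by (simp add: permutes_def)
    qed
  next
    assume h: "\<phi> permutes ({0..<m} - {0})"
    then show "\<phi> permutes {0..<m} \<and> \<phi> 0 = 0"
      using permutes_subset[OF h, of "{0..<m}"] permutes_not_in[OF h, of 0] by auto
  qed
  then show ?thesis by (auto simp: GG_def)
qed

lemma card_GG: "0 < m \<Longrightarrow> card (GG m) = fact (m - 1)"
  using GG_eq[of m] card_permutations[of "{0..<m} - {0}" "m - 1"] by (simp add: card_Diff_singleton)

lemma finite_GG: "finite (GG m)"
  unfolding GG_def by (rule finite_subset[OF _ finite_permutations[of "{0..<m}"]]) auto

lemma stab_trivial:
  assumes cs: "(s, a) \<in> CS {0..<m}" and p: "\<phi> \<in> GG m" and q: "\<psi> \<in> GG m"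
    and e1: "mp {0..<m} \<phi> s = mp {0..<m} \<psi> s" and e2: "mp {0..<m} \<phi> a = mp {0..<m} \<psi> a"
  shows "\<phi> = \<psi>"
proof -
  let ?A = "{0..<m}"
  have pp: "\<phi> permutes ?A" "\<phi> 0 = 0" and qq: "\<psi> permutes ?A" "\<psi> 0 = 0" using p q by (auto simp: GG_def)
  have injp: "inj_on \<phi> ?A" and injq: "inj_on \<psi> ?A" using pp(1) qq(1) permutes_inj_on by blast+
  let ?s' = "mp ?A \<phi> s" and ?a' = "mp ?A \<phi> a"
  have sp: "?s' permutes ?A" using map_permutation_permutes[OF permutes_imp_bij[OF pp(1)]] cs by (auto simp: CS_def)
  have cn: "conn ?A s a" using cs by (simp add: CS_def)
  have Ps: "\<phi> (s x) = ?s' (\<phi> x)" "\<phi> (a x) = ?a' (\<phi> x)" if "x \<in> ?A" for x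
    using map_permutation_apply[OF injp that] by auto
  have Qs: "\<psi> (s x) = ?s' (\<psi> x)" "\<psi> (a x) = ?a' (\<psi> x)" if "x \<in> ?A" for x
    using map_permutation_apply[OF injq that] e1 e2 by auto
  have reach: "\<phi> y = \<psi> y" if "(0, y) \<in> (rel ?A s a)\<^sup>*" for y
    using that
  proof (induction rule: rtrancl_induct)
    case base then show ?case using pp qq by simp
  next
    case (step y z)
    from rel_E[OF step(2)] obtain w where w: "w \<in> ?A" and
      c: "(y = w \<and> z = s w) \<or> (y = s w \<and> z = w) \<or> (y = w \<and> z = a w)" by blast
    show ?case
    proof -
      { assume "y = w \<and> z = s w" then have ?thesis using Ps Qs w step(3) by metis }
      moreover
      { assume h: "y = s w \<and> z = w"
        then have "?s' (\<phi> w) = ?s' (\<psi> w)" using Ps Qs w step(3) by metis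
        then have ?thesis using h permutes_inj[OF sp] by (simp add: inj_eq) }
      moreover
      { assume "y = w \<and> z = a w" then have ?thesis using Ps Qs w step(3) by metis }
      ultimately show ?thesis using c by blast
    qed
  qed
  show ?thesis
  proof
    fix y show "\<phi> y = \<psi> y"
    proof (cases "y \<in> ?A")
      case True
      have "0 \<in> ?A" using True by auto
      then have "(0, y) \<in> (rel ?A s a)\<^sup>*" using cn True by (simp add: conn_def)
      then show ?thesis by (rule reach)
    next
      case False then show ?thesis using pp qq by (simp add: permutes_not_in)
    qed
  qed
qed


lemma class_eq:
  assumes n: "n \<ge> 1" and cs: "(s, a) \<in> CS {0..<2*n-1}"
  shows "{M'. M' \<in> closed_maps_of_size n \<and> map_iso (2*n-1, s, a) M'} =
         (\<lambda>\<phi>. (2*n-1, mp {0..<2*n-1} \<phi> s, mp {0..<2*n-1} \<phi> a)) ` GG (2*n-1)"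
proof
  let ?m = "2*n-1" let ?A = "{0..<2*n-1}"
  have A0: "0 \<in> ?A" using n by auto
  have sp: "s permutes ?A" and ap: "a permutes ?A" using cs fpfi_permutes permutes_subset by (auto simp: CS_def) blast
  show "{M'. M' \<in> closed_maps_of_size n \<and> map_iso (?m, s, a) M'} \<subseteq> (\<lambda>\<phi>. (?m, mp ?A \<phi> s, mp ?A \<phi> a)) ` GG ?m"
  proof
    fix M' assume h: "M' \<in> {M'. M' \<in> closed_maps_of_size n \<and> map_iso (?m, s, a) M'}"
    then obtain s' a' where M': "M' = (?m, s', a')" and cs': "(s', a') \<in> CS ?A" using cms_char[OF n] by auto
    have sp': "s' permutes ?A" and ap': "a' permutes ?A" using cs' fpfi_permutes permutes_subset by (auto simp: CS_def) blast
    have mi: "map_iso (?m, s, a) (?m, s', a')" using h M' by simp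
    from mi obtain \<phi> where p: "\<phi> permutes ?A" and p0: "\<phi> 0 = 0"
      and c: "\<forall>x<?m. \<phi> (s x) = s' (\<phi> x) \<and> \<phi> (a x) = a' (\<phi> x)" unfolding map_iso_iff by auto
    have inj: "inj_on \<phi> ?A" using p permutes_inj_on by blast
    have im: "\<phi> ` ?A = ?A" using p by (rule permutes_image)
    have eq: "mp ?A \<phi> f = f'" if f': "f' permutes ?A" and cc: "\<forall>x<?m. \<phi> (f x) = f' (\<phi> x)" for f f'
    proof
      fix y show "mp ?A \<phi> f y = f' y"
      proof (cases "y \<in> ?A")
        case True
        then obtain x where x: "x \<in> ?A" "y = \<phi> x" using im by blast
        then show ?thesis using map_permutation_apply[OF inj x(1), of f] cc by auto
      next
        case False then show ?thesis using mp_outside[of y \<phi> ?A f] im permutes_not_in[OF f'] by auto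
      qed
    qed
    have "mp ?A \<phi> s = s'" using eq sp' c by blast
    moreover have "mp ?A \<phi> a = a'" using eq ap' c by blast
    ultimately show "M' \<in> (\<lambda>\<phi>. (?m, mp ?A \<phi> s, mp ?A \<phi> a)) ` GG ?m"
      using M' p p0 by (auto simp: GG_def)
  qed
  show "(\<lambda>\<phi>. (?m, mp ?A \<phi> s, mp ?A \<phi> a)) ` GG ?m \<subseteq> {M'. M' \<in> closed_maps_of_size n \<and> map_iso (?m, s, a) M'}"
  proof
    fix M' assume "M' \<in> (\<lambda>\<phi>. (?m, mp ?A \<phi> s, mp ?A \<phi> a)) ` GG ?m"
    then obtain \<phi> where p: "\<phi> permutes ?A" and p0: "\<phi> 0 = 0" and M': "M' = (?m, mp ?A \<phi> s, mp ?A \<phi> a)"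
      by (auto simp: GG_def)
    have inj: "inj_on \<phi> ?A" using p permutes_inj_on by blast
    have "(mp ?A \<phi> s, mp ?A \<phi> a) \<in> CS ?A" using CS_transport[OF permutes_imp_bij[OF p] A0 p0 cs] .
    then have "M' \<in> closed_maps_of_size n" using cms_char[OF n] M' by auto
    moreover have "map_iso (?m, s, a) M'" unfolding M' map_iso_iff
      using p p0 map_permutation_apply[OF inj] by auto
    ultimately show "M' \<in> {M'. M' \<in> closed_maps_of_size n \<and> map_iso (?m, s, a) M'}" by simp
  qed
qed

lemma g_count_ell:
  assumes n: "n \<ge> 1"
  shows "ell (2*n-1) = g_count n * fact (2*n-2)"
proof -
  let ?m = "2*n-1" let ?A = "{0..<2*n-1}"
  let ?S = "closed_maps_of_size n"
  let ?R = "{(M, M'). M \<in> ?S \<and> M' \<in> ?S \<and> map_iso M M'}"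
  have m: "0 < ?m" using n by simp
  have S: "?S = (\<lambda>(s,a). (?m, s, a)) ` CS ?A" by (rule cms_char[OF n])
  have finS: "finite ?S" using S finite_CS[of ?A] by simp
  have cardS: "card ?S = ell ?m"
  proof -
    have "inj_on (\<lambda>(s,a). (?m, s, a)) (CS ?A)" by (auto simp: inj_on_def)
    then show ?thesis using S card_image by (simp add: ell_def)
  qed
  have iso_gen: "map_iso M M" "map_iso M M' \<Longrightarrow> map_iso M' M" "map_iso M M' \<Longrightarrow> map_iso M' M'' \<Longrightarrow> map_iso M M''"
    for M M' M''
    using iso_refl[of "fst M" "fst (snd M)" "snd (snd M)"] iso_sym[of "fst M" "fst (snd M)" "snd (snd M)" "fst M'" "fst (snd M')" "snd (snd M')"]
      iso_trans[of "fst M" "fst (snd M)" "snd (snd M)" "fst M'" "fst (snd M')" "snd (snd M')" "fst M''" "fst (snd M'')" "snd (snd M'')"]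
    by auto
  have eqv: "equiv ?S ?R"
  proof (rule equivI)
    show "?R \<subseteq> ?S \<times> ?S" by auto
    show "refl_on ?S ?R" using iso_gen(1) by (auto simp: refl_on_def)
    show "sym ?R" using iso_gen(2) by (auto simp: sym_def)
    show "trans ?R" using iso_gen(3) by (auto simp: trans_def)
  qed
  have cls: "card X = fact (?m - 1)" if X: "X \<in> ?S // ?R" for X
  proof -
    from X obtain M where XM: "X = ?R `` {M}" and MS: "M \<in> ?S" by (rule quotientE)
    then obtain s a where Mc: "M = (?m, s, a)" and cs: "(s, a) \<in> CS ?A" using S by auto
    have "X = {M'. M' \<in> ?S \<and> map_iso (?m, s, a) M'}" using XM MS Mc by auto
    also have "\<dots> = (\<lambda>\<phi>. (?m, mp ?A \<phi> s, mp ?A \<phi> a)) ` GG ?m" by (rule class_eq[OF n cs])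
    finally have X2: "X = (\<lambda>\<phi>. (?m, mp ?A \<phi> s, mp ?A \<phi> a)) ` GG ?m" .
    have "inj_on (\<lambda>\<phi>. (?m, mp ?A \<phi> s, mp ?A \<phi> a)) (GG ?m)"
      by (rule inj_onI) (use stab_trivial[OF cs] in auto)
    then have "card X = card (GG ?m)" unfolding X2 by (rule card_image)
    then show ?thesis using card_GG[OF m] by simp
  qed
  have "card ?S = card (\<Union>(?S // ?R))" using Union_quotient[OF eqv] by simp
  also have "\<dots> = sum card (?S // ?R)"
  proof (rule card_Union_disjoint)
    show "pairwise disjnt (?S // ?R)" using quotient_disj[OF eqv] by (auto simp: pairwise_def disjnt_def)
    show "\<And>X. X \<in> ?S // ?R \<Longrightarrow> finite X" using in_quotient_imp_subset[OF eqv] finS finite_subset by blast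
  qed
  also have "\<dots> = card (?S // ?R) * fact (?m - 1)" using cls by simp
  also have "\<dots> = g_count n * fact (2*n-2)"
    by (simp add: g_count_def numeral_2_eq_2)
  finally show ?thesis using cardS by simp
qed


lemma sum_even:
  fixes f :: "nat \<Rightarrow> nat"
  assumes "\<And>j. odd j \<Longrightarrow> f j = 0"
  shows "(\<Sum>j=0..2*N. f j) = (\<Sum>i=0..N. f (2*i))"
proof (induction N)
  case 0 then show ?case by simp
next
  case (Suc N)
  have "(\<Sum>j=0..2*Suc N. f j) = (\<Sum>j=0..2*N. f j) + f (2*N+1) + f (2*N+2)"
    by (simp add: numeral_2_eq_2)
  also have "f (2*N+1) = 0" using assms by simp
  finally show ?case using Suc by simp
qed

lemma g_conv:
  assumes n: "n \<ge> 1"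
  shows "dfac n = (\<Sum>k=1..n. g_count k * dfac (n-k))"
proof -
  define N where "N = n - 1"
  have nN: "n = Suc N" using n N_def by simp
  let ?A = "{0..<2*n-1}"
  have cA: "card ?A = 2*N+1" using nN by simp
  have A0: "0 \<in> ?A" using n by simp
  have TS: "fact (2*N+1) * fpfc (2*N) = (\<Sum>j=0..2*N. (2*N choose j) * (ell (j+1) * FF (2*N - j)))"
  proof -
    have "fact (card ?A) * fpfc (card ?A - 1) = (\<Sum>j=0..card ?A - 1. (card ?A - 1 choose j) * (ell (j+1) * FF (card ?A - 1 - j)))"
      using TS_sum[OF _ A0] by blast
    then show ?thesis unfolding cA by simp
  qed
  have "(\<Sum>j=0..2*N. (2*N choose j) * (ell (j+1) * FF (2*N - j))) =
        (\<Sum>i=0..N. (2*N choose (2*i)) * (ell (2*i+1) * FF (2*N - 2*i)))"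
  proof (rule sum_even)
    fix j :: nat assume "odd j"
    then have "odd (2*N - j) \<or> j > 2*N" by presburger
    then have "FF (2*N - j) = 0 \<or> (2*N choose j) = 0" by (auto simp: FF_def fpfc_def)
    then show "(2*N choose j) * (ell (j+1) * FF (2*N - j)) = 0" by auto
  qed
  also have "\<dots> = (\<Sum>i=0..N. fact (2*N) * (g_count (i+1) * dfac (N - i)))"
  proof (rule sum.cong[OF refl])
    fix i assume i: "i \<in> {0..N}"
    have e1: "ell (2*i+1) = g_count (i+1) * fact (2*i)"
      using g_count_ell[of "i+1"] by simp
    have e2: "FF (2*N - 2*i) = fact (2*N - 2*i) * dfac (N - i)"
      using i by (simp add: FF_def fpfc_def flip: diff_mult_distrib2)
    have e3: "fact (2*i) * fact (2*N - 2*i) * (2*N choose (2*i)) = (fact (2*N) :: nat)"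
      using i by (intro binomial_fact_lemma) simp
    show "(2*N choose (2*i)) * (ell (2*i+1) * FF (2*N - 2*i)) = fact (2*N) * (g_count (i+1) * dfac (N - i))"
      unfolding e1 e2 e3[symmetric] by (simp add: algebra_simps)
  qed
  also have "\<dots> = fact (2*N) * (\<Sum>i=0..N. g_count (i+1) * dfac (N - i))"
    by (simp add: sum_distrib_left)
  finally have E: "fact (2*N+1) * fpfc (2*N) = fact (2*N) * (\<Sum>i=0..N. g_count (i+1) * dfac (N - i))"
    using TS by simp
  have "fact (2*N+1) * fpfc (2*N) = fact (2*N) * dfac (Suc N)"
    by (simp add: fpfc_def algebra_simps)
  then have "dfac (Suc N) = (\<Sum>i=0..N. g_count (i+1) * dfac (N - i))"
    using E by (metis fact_nonzero mult_left_cancel)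
  also have "\<dots> = (\<Sum>k=1..n. g_count k * dfac (n-k))"
    unfolding nN using sum.shift_bounds_cl_Suc_ivl[of "\<lambda>k. g_count k * dfac (Suc N - k)" 0 N] by simp
  finally show ?thesis using nN by simp
qed


theorem proposition2p2:
  shows "b_count 1 = 1 \<and> g_count 1 = 1 \<and>
    (\<forall>n\<ge>2. b_count n = (\<Sum>k=1..n-1. b_count k * b_count (n-k)) + (2*n-3) * b_count (n-1)) \<and>
    (\<forall>n\<ge>2. g_count n = (\<Sum>k=1..n-1. g_count k * g_count (n-k)) + (2*n-3) * g_count (n-1))"
proof -
  have B: "b_count 1 = 1 \<and> (\<forall>n\<ge>2. b_count n = (\<Sum>k=1..n-1. b_count k * b_count (n-k)) + (2*n-3) * b_count (n-1))"
    by (rule alg_main) (use b_conv in auto)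
  have G: "g_count 1 = 1 \<and> (\<forall>n\<ge>2. g_count n = (\<Sum>k=1..n-1. g_count k * g_count (n-k)) + (2*n-3) * g_count (n-1))"
    by (rule alg_main) (use g_conv in auto)
  show ?thesis using B G by blast
qed

end
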